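(* Let $K=3$, let $\check\Sigma$ be a symmetric positive semidefinite $d_1d_2d_3\times d_1d_2d_3$ matrix, and let $\bar\Sigma_1,\bar\Sigma_2,\bar\Sigma_3$ be produced from $\check\Sigma$ by the hierarchical SVD procedure described in the context. Then: (i) with an appropriate choice of the signs of the leading singular vectors, each $\bar\Sigma_k$ ($k=1,2,3$) is symmetric and positive semidefinite; (ii) suppose $d_1,d_2,d_3$ are fixed, $\Sigma=\Sigma_3\otimes\Sigma_2\otimes\Sigma_1$ with each $\Sigma_k$ a $d_k\times d_k$ symmetric positive definite matrix normalized by $\|\Sigma_1\|_F=\|\Sigma_2\|_F=1$, and $\check\Sigma=\check\Sigma_T$ is a sequence of estimators with $\|\check\Sigma-\Sigma\|_F=o_p(1)$ as $T\to\infty$. Then, with the signs chosen as in (i), $\|\bar\Sigma_k-\Sigma_k\|_F=o_p(1)$ for $k=1,2,3$.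
   Context: $\mathrm{vec}$ stacks columns and $\mathrm{vec}^{-1}$ is its inverse (reshaping a vector of length $m^2$ into an $m\times m$ matrix). Let $\mathcal R_1:\mathbb R^{d_1d_2d_3\times d_1d_2d_3}\to\mathbb R^{d_1^2\times d_2^2d_3^2}$ be the linear rearrangement with $\mathcal R_1(B\otimes A)=\mathrm{vec}(A)\mathrm{vec}(B)'$ for all $A\in\mathbb R^{d_1\times d_1}$, $B\in\mathbb R^{d_2d_3\times d_2d_3}$, and $\mathcal R_2:\mathbb R^{d_2d_3\times d_2d_3}\to\mathbb R^{d_2^2\times d_3^2}$ the linear rearrangement with $\mathcal R_2(C\otimes B)=\mathrm{vec}(B)\mathrm{vec}(C)'$ for $B\in\mathbb R^{d_2\times d_2}$, $C\in\mathbb R^{d_3\times d_3}$. Hierarchical SVD procedure: let $s_1,u_1,v_1$ be the largest singular value and corresponding unit left/right singular vectors of $S_1=\mathcal R_1(\check\Sigma)$; set $\bar\Sigma_1=\mathrm{vec}^{-1}(u_1)$. Let $\sigma_1,a_1,b_1$ be the largest singular value and unit left/right singular vectors of $S_2=\mathcal R_2(\mathrm{vec}^{-1}(s_1v_1))$; set $\bar\Sigma_2=\mathrm{vec}^{-1}(a_1)$ and $\bar\Sigma_3=\mathrm{vec}^{-1}(\sigma_1b_1)$. *)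

theory Defs
  imports "HOL-Probability.Probability"
begin

text \<open>Conventions: all indices are 0-based. A (real) m x n matrix is a function
  nat \<Rightarrow> nat \<Rightarrow> real of which only the entries with row index < m and column
  index < n are relevant; a vector of length n is a function nat \<Rightarrow> real of which
  only the entries with index < n are relevant.\<close>

definition unit_vec :: "nat \<Rightarrow> (nat \<Rightarrow> real) \<Rightarrow> bool" where
  "unit_vec n x \<longleftrightarrow> (\<Sum>i<n. (x i)\<^sup>2) = 1"

definition sing_triple ::
  "nat \<Rightarrow> nat \<Rightarrow> (nat \<Rightarrow> nat \<Rightarrow> real) \<Rightarrow> real \<Rightarrow> (nat \<Rightarrow> real) \<Rightarrow> (nat \<Rightarrow> real) \<Rightarrow> bool" where
  "sing_triple m n S s u v \<longleftrightarrow>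
     0 \<le> s \<and> unit_vec m u \<and> unit_vec n v \<and>
     (\<forall>i<m. (\<Sum>j<n. S i j * v j) = s * u i) \<and>
     (\<forall>j<n. (\<Sum>i<m. S i j * u i) = s * v j)"

definition top_sing_triple ::
  "nat \<Rightarrow> nat \<Rightarrow> (nat \<Rightarrow> nat \<Rightarrow> real) \<Rightarrow> real \<Rightarrow> (nat \<Rightarrow> real) \<Rightarrow> (nat \<Rightarrow> real) \<Rightarrow> bool" where
  "top_sing_triple m n S s u v \<longleftrightarrow>
     sing_triple m n S s u v \<and> (\<forall>s' u' v'. sing_triple m n S s' u' v' \<longrightarrow> s' \<le> s)"

definition vec :: "nat \<Rightarrow> (nat \<Rightarrow> nat \<Rightarrow> real) \<Rightarrow> nat \<Rightarrow> real" where
  "vec m A = (\<lambda>k. A (k mod m) (k div m))"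

definition unvec :: "nat \<Rightarrow> (nat \<Rightarrow> real) \<Rightarrow> nat \<Rightarrow> nat \<Rightarrow> real" where
  "unvec m v = (\<lambda>i j. v (i + m * j))"

text \<open>Kronecker product B \<otimes> A with A of size p x p and B of size q x q.\<close>
definition kron :: "nat \<Rightarrow> (nat \<Rightarrow> nat \<Rightarrow> real) \<Rightarrow> (nat \<Rightarrow> nat \<Rightarrow> real) \<Rightarrow> nat \<Rightarrow> nat \<Rightarrow> real" where
  "kron p B A = (\<lambda>i j. B (i div p) (j div p) * A (i mod p) (j mod p))"

text \<open>The linear rearrangement R: R^{pq x pq} \<rightarrow> R^{p^2 x q^2} with
  R(B \<otimes> A) = vec(A) vec(B)' for A p x p, B q x q (see lemma rearr_kron).\<close>
definition rearr :: "nat \<Rightarrow> nat \<Rightarrow> (nat \<Rightarrow> nat \<Rightarrow> real) \<Rightarrow> nat \<Rightarrow> nat \<Rightarrow> real" where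
  "rearr p q M = (\<lambda>k l. M ((l mod q) * p + k mod p) ((l div q) * p + k div p))"

lemma rearr_kron:
  assumes "0 < p" "0 < q" "k < p^2" "l < q^2"
  shows "rearr p q (kron p B A) k l = vec p A k * vec q B l"
proof -
  have "k div p < p" using assms(3) by (simp add: power2_eq_square less_mult_imp_div_less)
  then show ?thesis using assms by (simp add: rearr_def kron_def vec_def)
qed

text \<open>Hierarchical SVD procedure (K = 3): Sb1, Sb2, Sb3 are a possible output
  for input Sc (different choices of leading singular vectors give different outputs).\<close>
definition hsvd ::
  "nat \<Rightarrow> nat \<Rightarrow> nat \<Rightarrow> (nat \<Rightarrow> nat \<Rightarrow> real) \<Rightarrow>
   (nat \<Rightarrow> nat \<Rightarrow> real) \<Rightarrow> (nat \<Rightarrow> nat \<Rightarrow> real) \<Rightarrow> (nat \<Rightarrow> nat \<Rightarrow> real) \<Rightarrow> bool" where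
  "hsvd d1 d2 d3 Sc Sb1 Sb2 Sb3 \<longleftrightarrow>
     (\<exists>s1 u1 v1 \<sigma>1 a1 b1.
        top_sing_triple (d1^2) ((d2*d3)^2) (rearr d1 (d2*d3) Sc) s1 u1 v1 \<and>
        Sb1 = unvec d1 u1 \<and>
        top_sing_triple (d2^2) (d3^2) (rearr d2 d3 (unvec (d2*d3) (\<lambda>k. s1 * v1 k))) \<sigma>1 a1 b1 \<and>
        Sb2 = unvec d2 a1 \<and>
        Sb3 = unvec d3 (\<lambda>k. \<sigma>1 * b1 k))"

definition symm :: "nat \<Rightarrow> (nat \<Rightarrow> nat \<Rightarrow> real) \<Rightarrow> bool" where
  "symm n A \<longleftrightarrow> (\<forall>i<n. \<forall>j<n. A i j = A j i)"

definition psd :: "nat \<Rightarrow> (nat \<Rightarrow> nat \<Rightarrow> real) \<Rightarrow> bool" where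
  "psd n A \<longleftrightarrow> symm n A \<and> (\<forall>x. 0 \<le> (\<Sum>i<n. \<Sum>j<n. x i * A i j * x j))"

definition pd :: "nat \<Rightarrow> (nat \<Rightarrow> nat \<Rightarrow> real) \<Rightarrow> bool" where
  "pd n A \<longleftrightarrow> symm n A \<and> (\<forall>x. (\<exists>i<n. x i \<noteq> 0) \<longrightarrow> 0 < (\<Sum>i<n. \<Sum>j<n. x i * A i j * x j))"

definition frob :: "nat \<Rightarrow> (nat \<Rightarrow> nat \<Rightarrow> real) \<Rightarrow> real" where
  "frob n A = sqrt (\<Sum>i<n. \<Sum>j<n. (A i j)\<^sup>2)"

definition mdiff :: "(nat \<Rightarrow> nat \<Rightarrow> real) \<Rightarrow> (nat \<Rightarrow> nat \<Rightarrow> real) \<Rightarrow> nat \<Rightarrow> nat \<Rightarrow> real" where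
  "mdiff A B = (\<lambda>i j. A i j - B i j)"

definition o_p1 :: "'a measure \<Rightarrow> (nat \<Rightarrow> 'a \<Rightarrow> real) \<Rightarrow> bool" where
  "o_p1 M X \<longleftrightarrow>
     (\<forall>\<epsilon>>0. ((\<lambda>T. measure M {\<omega> \<in> space M. \<epsilon> < \<bar>X T \<omega>\<bar>}) \<longlongrightarrow> 0) sequentially)"

end

theory Submission
  imports Defs
begin
definition dotp :: "nat \<Rightarrow> (nat\<Rightarrow>real) \<Rightarrow> (nat\<Rightarrow>real) \<Rightarrow> real" where
  "dotp n x y = (\<Sum>i<n. x i * y i)"
definition nsq :: "nat \<Rightarrow> (nat\<Rightarrow>real) \<Rightarrow> real" where
  "nsq n x = (\<Sum>i<n. (x i)\<^sup>2)"
definition bil :: "nat \<Rightarrow> nat \<Rightarrow> (nat \<Rightarrow> nat \<Rightarrow> real) \<Rightarrow> (nat\<Rightarrow>real) \<Rightarrow> (nat\<Rightarrow>real) \<Rightarrow> real" where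
  "bil m n R x y = (\<Sum>i<m. \<Sum>j<n. x i * R i j * y j)"
definition fr :: "nat \<Rightarrow> nat \<Rightarrow> (nat \<Rightarrow> nat \<Rightarrow> real) \<Rightarrow> real" where
  "fr m n R = (\<Sum>i<m. \<Sum>j<n. (R i j)\<^sup>2)"
definition Sph :: "nat \<Rightarrow> (nat \<Rightarrow> real) set" where
  "Sph n = {x. (\<forall>i. n \<le> i \<longrightarrow> x i = 0) \<and> nsq n x = 1}"

lemma nsq_nonneg: "0 \<le> nsq n x"
  unfolding nsq_def by (simp add: sum_nonneg)

lemma cs: "(dotp n x y)\<^sup>2 \<le> nsq n x * nsq n y"
  unfolding dotp_def nsq_def by (rule Cauchy_Schwarz_ineq_sum)

lemma nsq_term_le: "i < n \<Longrightarrow> (x i)\<^sup>2 \<le> nsq n x"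
  unfolding nsq_def by (rule member_le_sum) auto

lemma bil_bound: "(bil m n R x y)\<^sup>2 \<le> fr m n R * nsq m x * nsq n y"
proof -
  have "(bil m n R x y)\<^sup>2 = (\<Sum>i<m. x i * (\<Sum>j<n. R i j * y j))\<^sup>2"
    unfolding bil_def by (simp add: sum_distrib_left mult.assoc)
  also have "\<dots> \<le> nsq m x * (\<Sum>i<m. (\<Sum>j<n. R i j * y j)\<^sup>2)"
    using Cauchy_Schwarz_ineq_sum[of x _ "{..<m}"] unfolding nsq_def by simp
  also have "\<dots> \<le> nsq m x * (\<Sum>i<m. (\<Sum>j<n. (R i j)\<^sup>2) * nsq n y)"
    apply (rule mult_left_mono[OF sum_mono nsq_nonneg])
    unfolding nsq_def by (rule Cauchy_Schwarz_ineq_sum)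
  also have "\<dots> = fr m n R * nsq m x * nsq n y"
    unfolding fr_def by (simp add: sum_distrib_right sum_distrib_left mult_ac)
  finally show ?thesis .
qed

lemma abs_bil_bound:
  assumes "fr m n R \<le> d\<^sup>2" "0 \<le> d" "nsq m x = 1" "nsq n y = 1"
  shows "\<bar>bil m n R x y\<bar> \<le> d"
proof -
  have "(bil m n R x y)\<^sup>2 \<le> d\<^sup>2" using bil_bound[of m n R x y] assms by simp
  thus ?thesis using assms(2) power2_le_imp_le[of "\<bar>bil m n R x y\<bar>" d] by simp
qed

lemma continuous_coord: "continuous_on S (\<lambda>x::nat\<Rightarrow>real. x i)"
  by (rule continuous_on_subset[OF continuous_on_product_coordinates]) auto

lemma compact_box: "compact (PiE UNIV (\<lambda>i::nat. if i < n then {-1..1::real} else {0}))"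
proof -
  have "compactin (product_topology (\<lambda>i. euclidean) UNIV) (PiE UNIV (\<lambda>i::nat. if i < n then {-1..1::real} else {0}))"
    by (subst compactin_PiE) auto
  thus ?thesis by (simp add: euclidean_product_topology)
qed

lemma closed_Sph_set: "closed {x::nat\<Rightarrow>real. (\<forall>i. n \<le> i \<longrightarrow> x i = 0) \<and> nsq n x = 1}"
proof -
  have c1: "closed {x::nat\<Rightarrow>real. n \<le> i \<longrightarrow> x i = 0}" for i
    by (cases "n \<le> i") (auto intro!: closed_Collect_eq continuous_coord continuous_intros)
  have c2: "closed {x::nat\<Rightarrow>real. nsq n x = 1}"
    unfolding nsq_def by (auto intro!: closed_Collect_eq continuous_coord continuous_intros)
  show ?thesis using c1 c2 by (intro closed_Collect_conj closed_Collect_all) auto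
qed

lemma compact_Sph: "compact (Sph n)"
proof -
  have "Sph n = PiE UNIV (\<lambda>i::nat. if i < n then {-1..1::real} else {0}) \<inter>
     {x::nat\<Rightarrow>real. (\<forall>i. n \<le> i \<longrightarrow> x i = 0) \<and> nsq n x = 1}"
  proof (auto simp: Sph_def PiE_def Pi_def)
    fix x :: "nat \<Rightarrow> real" and i assume "nsq n x = 1" "i < n"
    hence "(x i)\<^sup>2 \<le> 1" using nsq_term_le[of i n x] by simp
    hence "\<bar>x i\<bar> \<le> 1" using power2_le_imp_le[of "\<bar>x i\<bar>" 1] by simp
    thus "-1 \<le> x i" "x i \<le> 1" by auto
  qed
  thus ?thesis using compact_Int_closed[OF compact_box closed_Sph_set] by simp
qed

lemma continuous_bil: "continuous_on S (\<lambda>z::(nat\<Rightarrow>real)\<times>(nat\<Rightarrow>real). bil m n R (fst z) (snd z))"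
proof -
  have f: "continuous_on S (\<lambda>z::(nat\<Rightarrow>real)\<times>(nat\<Rightarrow>real). fst z i)" for i
    using continuous_on_compose2[OF continuous_coord[of UNIV i] continuous_on_fst[OF continuous_on_id]] by auto
  have s: "continuous_on S (\<lambda>z::(nat\<Rightarrow>real)\<times>(nat\<Rightarrow>real). snd z i)" for i
    using continuous_on_compose2[OF continuous_coord[of UNIV i] continuous_on_snd[OF continuous_on_id]] by auto
  show ?thesis unfolding bil_def by (intro continuous_intros f s)
qed

lemma exists_max:
  assumes "compact K1" "compact K2" "K1 \<noteq> {}" "K2 \<noteq> {}"
  shows "\<exists>u\<in>K1. \<exists>v\<in>K2. \<forall>x\<in>K1. \<forall>y\<in>K2. bil m n R x y \<le> bil m n R u v"
proof -
  have "\<exists>z\<in>K1 \<times> K2. \<forall>y\<in>K1 \<times> K2. bil m n R (fst y) (snd y) \<le> bil m n R (fst z) (snd z)"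
    by (rule continuous_attains_sup[OF compact_Times[OF assms(1,2)] _ continuous_bil]) (use assms(3,4) in auto)
  then obtain z where "z \<in> K1 \<times> K2" "\<forall>y\<in>K1 \<times> K2. bil m n R (fst y) (snd y) \<le> bil m n R (fst z) (snd z)"
    by blast
  thus ?thesis by (metis mem_Times_iff fst_conv snd_conv)
qed

definition trunc :: "nat \<Rightarrow> (nat \<Rightarrow> real) \<Rightarrow> nat \<Rightarrow> real" where
  "trunc n x = (\<lambda>i. if i < n then x i else 0)"

lemma nsq_trunc[simp]: "nsq n (trunc n x) = nsq n x"
  unfolding nsq_def trunc_def by simp
lemma bil_trunc[simp]: "bil m n R (trunc m x) (trunc n y) = bil m n R x y"
  unfolding bil_def trunc_def by simp
lemma trunc_Sph: "nsq n x = 1 \<Longrightarrow> trunc n x \<in> Sph n"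
  unfolding Sph_def using nsq_trunc[of n x] by (auto simp: trunc_def)
lemma unit_vec_nsq: "unit_vec n x \<longleftrightarrow> nsq n x = 1"
  unfolding unit_vec_def nsq_def by simp

lemma e0_Sph: "1 \<le> n \<Longrightarrow> (\<lambda>i. if i = 0 then 1 else 0) \<in> Sph n"
proof -
  assume n: "1 \<le> n"
  have "(\<Sum>i<n. ((\<lambda>i. if i = 0 then 1 else 0::real) i)\<^sup>2) = (\<Sum>i<n. if i = 0 then 1 else 0)"
    by (rule sum.cong) auto
  also have "\<dots> = 1" using n by simp
  finally show ?thesis unfolding Sph_def nsq_def using n by auto
qed

lemma nsq_diff_expand:
  "nsq n (\<lambda>i. a i - c * b i) = nsq n a - 2 * c * dotp n b a + c\<^sup>2 * nsq n b"
  unfolding nsq_def dotp_def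
  by (simp add: power2_diff sum.distrib sum_subtractf sum_distrib_left power_mult_distrib algebra_simps)

lemma nsq_zero_iff: "nsq n a = 0 \<longleftrightarrow> (\<forall>i<n. a i = 0)"
  unfolding nsq_def by (auto simp: sum_nonneg_eq_0_iff)

lemma bil_as_dotp: "bil m n R x y = dotp m x (\<lambda>i. \<Sum>j<n. R i j * y j)"
  unfolding bil_def dotp_def by (simp add: sum_distrib_left mult.assoc)

lemma bil_transpose: "bil m n R x y = bil n m (\<lambda>j i. R i j) y x"
  unfolding bil_def by (subst sum.swap) (simp add: mult_ac)

lemma half_cond:
  assumes u0: "nsq m u0 = 1" and v0: "nsq n v0 = 1"
    and mx: "\<And>x. nsq m x = 1 \<Longrightarrow> bil m n R x v0 \<le> bil m n R u0 v0"
  shows "\<forall>i<m. (\<Sum>j<n. R i j * v0 j) = bil m n R u0 v0 * u0 i"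
proof -
  define w where "w = (\<lambda>i. \<Sum>j<n. R i j * v0 j)"
  define s where "s = bil m n R u0 v0"
  have bx: "bil m n R x v0 = dotp m x w" for x unfolding w_def by (simp add: bil_as_dotp)
  have sw: "s = dotp m u0 w" unfolding s_def bx ..
  have key: "nsq m (\<lambda>i. w i - s * u0 i) = 0"
  proof (cases "nsq m w = 0")
    case True
    hence "\<forall>i<m. w i = 0" by (simp add: nsq_zero_iff)
    hence "s = 0" unfolding sw dotp_def by simp
    with True show ?thesis by (simp add: nsq_diff_expand)
  next
    case False
    define N where "N = sqrt (nsq m w)"
    have Npos: "N > 0" using False nsq_nonneg[of m w] unfolding N_def by simp
    have NN: "N\<^sup>2 = nsq m w" unfolding N_def using nsq_nonneg[of m w] by simp
    define x where "x = (\<lambda>i. w i / N)"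
    have "nsq m x = nsq m w / N\<^sup>2" unfolding x_def nsq_def by (simp add: power_divide sum_divide_distrib)
    hence x1: "nsq m x = 1" using NN Npos False by simp
    have "dotp m x w = nsq m w / N" unfolding x_def dotp_def nsq_def
      by (simp add: sum_divide_distrib power2_eq_square)
    moreover have "nsq m w / N = N" using Npos by (simp only: NN[symmetric]) (simp add: power2_eq_square)
    ultimately have "N \<le> s" using mx[OF x1] bx[of x] unfolding s_def by simp
    moreover have "s\<^sup>2 \<le> N\<^sup>2" using cs[of m u0 w] u0 NN sw by (simp add: dotp_def)
    ultimately have "s = N" using Npos power2_le_imp_le[of s N] by linarith
    moreover have "dotp m u0 w = N" using sw \<open>s = N\<close> by simp
    ultimately show ?thesis by (simp add: nsq_diff_expand u0 NN[symmetric]) (simp add: power2_eq_square)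
  qed
  show ?thesis using key unfolding nsq_zero_iff w_def s_def by simp
qed

lemma max_sing:
  assumes u0: "nsq m u0 = 1" and v0: "nsq n v0 = 1"
    and mx: "\<And>x y. nsq m x = 1 \<Longrightarrow> nsq n y = 1 \<Longrightarrow> bil m n R x y \<le> bil m n R u0 v0"
  shows "sing_triple m n R (bil m n R u0 v0) u0 v0"
proof -
  have c1: "\<forall>i<m. (\<Sum>j<n. R i j * v0 j) = bil m n R u0 v0 * u0 i"
    by (rule half_cond[OF u0 v0]) (use mx v0 in auto)
  have c2: "\<forall>j<n. (\<Sum>i<m. (\<lambda>j i. R i j) j i * u0 i) = bil n m (\<lambda>j i. R i j) v0 u0 * v0 j"
    by (rule half_cond[OF v0 u0]) (use mx u0 in \<open>auto simp: bil_transpose[of m n R, symmetric]\<close>)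
  have nn: "nsq m (\<lambda>i. - u0 i) = 1" using u0 unfolding nsq_def by simp
  have "bil m n R (\<lambda>i. - u0 i) v0 = - bil m n R u0 v0" unfolding bil_def by (simp add: sum_negf)
  hence s0: "0 \<le> bil m n R u0 v0" using mx[OF nn v0] by simp
  show ?thesis unfolding sing_triple_def unit_vec_nsq
    using c1 c2 s0 u0 v0 by (simp add: bil_transpose[of m n R, symmetric])
qed

lemma sing_bil:
  assumes "sing_triple m n R s u v"
  shows "s = bil m n R u v"
proof -
  have "bil m n R u v = dotp m u (\<lambda>i. s * u i)"
    unfolding bil_as_dotp dotp_def using assms unfolding sing_triple_def by simp
  also have "\<dots> = s * nsq m u" unfolding dotp_def nsq_def
    by (simp add: sum_distrib_left power2_eq_square mult_ac)
  finally show ?thesis using assms unfolding sing_triple_def unit_vec_nsq by simp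
qed

lemma exists_top_max:
  assumes "1 \<le> m" "1 \<le> n"
  shows "\<exists>s u v. sing_triple m n R s u v \<and>
    (\<forall>x y. nsq m x = 1 \<longrightarrow> nsq n y = 1 \<longrightarrow> bil m n R x y \<le> s)"
proof -
  obtain u v where u: "u \<in> Sph m" and v: "v \<in> Sph n"
    and mx: "\<forall>x\<in>Sph m. \<forall>y\<in>Sph n. bil m n R x y \<le> bil m n R u v"
    using exists_max[OF compact_Sph compact_Sph, of m n m n R] e0_Sph[OF assms(1)] e0_Sph[OF assms(2)]
    by blast
  have mx': "bil m n R x y \<le> bil m n R u v" if "nsq m x = 1" "nsq n y = 1" for x y
    using mx trunc_Sph[OF that(1)] trunc_Sph[OF that(2)] by (metis bil_trunc)
  have "nsq m u = 1" "nsq n v = 1" using u v unfolding Sph_def by auto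
  thus ?thesis using max_sing[OF _ _ mx'] mx' by blast
qed

lemma top_ge:
  assumes "top_sing_triple m n R s u v" "1 \<le> m" "1 \<le> n" "nsq m x = 1" "nsq n y = 1"
  shows "bil m n R x y \<le> s"
proof -
  obtain s' u' v' where "sing_triple m n R s' u' v'" and "bil m n R x y \<le> s'"
    using exists_top_max[OF assms(2,3), of R] assms(4,5) by blast
  thus ?thesis using assms(1) unfolding top_sing_triple_def by force
qed

lemma max_top:
  assumes u0: "nsq m u0 = 1" and v0: "nsq n v0 = 1"
    and mx: "\<And>x y. nsq m x = 1 \<Longrightarrow> nsq n y = 1 \<Longrightarrow> bil m n R x y \<le> bil m n R u0 v0"
  shows "top_sing_triple m n R (bil m n R u0 v0) u0 v0"
  unfolding top_sing_triple_def using max_sing[OF assms] mx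
  by (metis sing_bil sing_triple_def unit_vec_nsq)

definition orthon :: "nat \<Rightarrow> (nat \<Rightarrow> nat \<Rightarrow> real) \<Rightarrow> nat \<Rightarrow> bool" where
  "orthon n x r \<longleftrightarrow> (\<forall>a<r. \<forall>b<r. dotp n (x a) (x b) = (if a = b then 1 else 0))"

lemma nsq_sub_comb:
  "nsq n (\<lambda>j. z j - (\<Sum>a<r. c a * X a j)) =
     nsq n z - 2 * (\<Sum>a<r. c a * dotp n (X a) z) + (\<Sum>a<r. \<Sum>b<r. c a * c b * dotp n (X a) (X b))"
proof -
  have "nsq n (\<lambda>j. z j - (\<Sum>a<r. c a * X a j)) =
     (\<Sum>j<n. (z j)\<^sup>2) - 2 * (\<Sum>j<n. z j * (\<Sum>a<r. c a * X a j)) + (\<Sum>j<n. (\<Sum>a<r. c a * X a j)\<^sup>2)"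
    unfolding nsq_def by (simp add: power2_diff sum.distrib sum_subtractf sum_distrib_left algebra_simps)
  moreover have "(\<Sum>j<n. z j * (\<Sum>a<r. c a * X a j)) = (\<Sum>a<r. c a * dotp n (X a) z)"
    unfolding dotp_def by (simp add: sum_distrib_left mult_ac) (rule sum.swap)
  moreover have "(\<Sum>j<n. (\<Sum>a<r. c a * X a j)\<^sup>2) = (\<Sum>a<r. \<Sum>b<r. c a * c b * dotp n (X a) (X b))"
  proof -
    have "(\<Sum>j<n. (\<Sum>a<r. c a * X a j)\<^sup>2) = (\<Sum>j<n. \<Sum>a<r. \<Sum>b<r. c a * c b * (X a j * X b j))"
      by (simp add: power2_eq_square sum_product mult_ac)
    also have "\<dots> = (\<Sum>a<r. \<Sum>j<n. \<Sum>b<r. c a * c b * (X a j * X b j))" by (rule sum.swap)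
    also have "\<dots> = (\<Sum>a<r. \<Sum>b<r. \<Sum>j<n. c a * c b * (X a j * X b j))"
      by (rule sum.cong[OF refl], rule sum.swap)
    finally show ?thesis unfolding dotp_def by (simp add: sum_distrib_left)
  qed
  ultimately show ?thesis unfolding nsq_def by simp
qed

lemma orthon_double_sum:
  assumes "orthon n X r"
  shows "(\<Sum>a<r. \<Sum>b<r. c a * d b * dotp n (X a) (X b)) = (\<Sum>a<r. c a * d a)"
proof -
  have "(\<Sum>a<r. \<Sum>b<r. c a * d b * dotp n (X a) (X b)) = (\<Sum>a<r. \<Sum>b<r. if a = b then c a * d b else 0)"
    using assms unfolding orthon_def by (intro sum.cong refl) auto
  thus ?thesis by simp
qed

lemma nsq_delta: "i < n \<Longrightarrow> nsq n (\<lambda>j. if j = i then 1 else 0) = 1"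
proof -
  assume i: "i < n"
  have "nsq n (\<lambda>j. if j = i then 1 else 0) = (\<Sum>j<n. if j = i then 1 else 0)"
    unfolding nsq_def by (rule sum.cong) auto
  thus ?thesis using i by simp
qed

lemma bessel:
  assumes "orthon n x r"
  shows "r \<le> n"
proof -
  have col: "(\<Sum>a<r. (x a i)\<^sup>2) \<le> 1" if i: "i < n" for i
  proof -
    define e where "e = (\<lambda>j. if j = i then 1 else (0::real))"
    have de: "dotp n (x a) e = x a i" for a unfolding dotp_def e_def using i
      by (simp add: if_distrib cong: if_cong)
    have ne: "nsq n e = 1" unfolding e_def using i by (rule nsq_delta)
    have "0 \<le> nsq n (\<lambda>j. e j - (\<Sum>a<r. x a i * x a j))" by (rule nsq_nonneg)
    also have "\<dots> = 1 - (\<Sum>a<r. (x a i)\<^sup>2)"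
      unfolding nsq_sub_comb[where c="\<lambda>a. x a i" and X=x and z=e] de ne orthon_double_sum[OF assms]
      by (simp add: power2_eq_square)
    finally show ?thesis by simp
  qed
  have "r = (\<Sum>a<r. nsq n (x a))"
    using assms unfolding orthon_def dotp_def nsq_def by (simp add: power2_eq_square)
  also have "\<dots> = (\<Sum>i<n. \<Sum>a<r. (x a i)\<^sup>2)" unfolding nsq_def by (rule sum.swap)
  also have "\<dots> \<le> (\<Sum>i<n. 1)" by (rule sum_mono) (simp add: col)
  finally show ?thesis by simp
qed

lemma sum_if_eq: "j0 < (n::nat) \<Longrightarrow> (\<Sum>j<n. if j = j0 then f j else 0) = (f j0::real)"
  by (subst sum.delta) auto

lemma sum_delta_r: "j0 < (n::nat) \<Longrightarrow> (\<Sum>j<n. f j * (if j = j0 then 1 else 0)) = (f j0::real)"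
proof -
  assume j0: "j0 < n"
  have "(\<Sum>j<n. f j * (if j = j0 then 1 else 0)) = (\<Sum>j<n. if j = j0 then f j else 0)"
    by (rule sum.cong) auto
  also have "\<dots> = f j0" by (rule sum_if_eq) fact
  finally show ?thesis .
qed

lemma bil_delta:
  assumes "i0 < m" "j0 < n"
  shows "bil m n R (\<lambda>i. c * (if i = i0 then 1 else 0)) (\<lambda>j. if j = j0 then 1 else 0) = c * R i0 j0"
proof -
  have "bil m n R (\<lambda>i. c * (if i = i0 then 1 else 0)) (\<lambda>j. if j = j0 then 1 else 0) =
      (\<Sum>i<m. (c * R i j0) * (if i = i0 then 1 else 0))"
    unfolding bil_def
  proof (intro sum.cong refl)
    fix i
    show "(\<Sum>j<n. c * (if i = i0 then 1 else 0) * R i j * (if j = j0 then 1 else 0)) =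
          c * R i j0 * (if i = i0 then 1 else 0)"
    proof (cases "i = i0")
      case True
      have "(\<Sum>j<n. (c * R i0 j) * (if j = j0 then 1 else 0)) = c * R i0 j0" by (rule sum_delta_r) fact
      thus ?thesis using True by simp
    qed simp
  qed
  also have "\<dots> = c * R i0 j0" by (rule sum_delta_r) fact
  finally show ?thesis .
qed

lemma nsq_delta_c: "i < n \<Longrightarrow> c\<^sup>2 = 1 \<Longrightarrow> nsq n (\<lambda>j. c * (if j = i then 1 else 0)) = 1"
  using nsq_delta[of i n] by (simp add: nsq_def power_mult_distrib)

lemma dotp_comm: "dotp n x y = dotp n y x"
  unfolding dotp_def by (simp add: mult.commute)

lemma svd_gen:
  assumes "n - k = d" "1 \<le> n" "orthon n x k" "orthon n y k" "\<forall>a<k. 0 \<le> \<sigma> a"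
   "\<forall>a<k. \<forall>i<n. (\<Sum>j<n. (A i j - (\<Sum>b<k. \<sigma> b * x b i * y b j)) * y a j) = 0"
   "\<forall>a<k. \<forall>j<n. (\<Sum>i<n. (A i j - (\<Sum>b<k. \<sigma> b * x b i * y b j)) * x a i) = 0"
  shows "\<exists>r \<sigma> x y. (\<forall>a<r. 0 \<le> \<sigma> a) \<and> orthon n x r \<and> orthon n y r \<and>
           (\<forall>i<n. \<forall>j<n. A i j = (\<Sum>a<r. \<sigma> a * x a i * y a j))"
using assms
proof (induction d arbitrary: k x y \<sigma> rule: less_induct)
  case (less d)
  define B where "B = (\<lambda>i j. A i j - (\<Sum>b<k. \<sigma> b * x b i * y b j))"
  show ?case
  proof (cases "\<forall>i<n. \<forall>j<n. B i j = 0")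
    case True
    hence "\<forall>i<n. \<forall>j<n. A i j = (\<Sum>a<k. \<sigma> a * x a i * y a j)" unfolding B_def by simp
    thus ?thesis using less.prems by blast
  next
    case False
    then obtain i0 j0 where ij: "i0 < n" "j0 < n" "B i0 j0 \<noteq> 0" by blast
    obtain s u v where st: "sing_triple n n B s u v"
      and mx: "\<forall>x y. nsq n x = 1 \<longrightarrow> nsq n y = 1 \<longrightarrow> bil n n B x y \<le> s"
      using exists_top_max[OF less.prems(2) less.prems(2)] by blast
    have "c * B i0 j0 \<le> s" if "c\<^sup>2 = 1" for c
      using mx[rule_format, OF nsq_delta_c[OF ij(1) that] nsq_delta_c[OF ij(2), of 1]] bil_delta[OF ij(1,2), of B c]
      by simp
    from this[of 1] this[of "-1"] ij(3) have spos: "0 < s" by auto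
    have Bv: "\<forall>i<n. (\<Sum>j<n. B i j * v j) = s * u i" and Bu: "\<forall>j<n. (\<Sum>i<n. B i j * u i) = s * v j"
      and u1: "nsq n u = 1" and v1: "nsq n v = 1"
      using st unfolding sing_triple_def unit_vec_nsq by auto
    have ux: "dotp n u (x a) = 0" if a: "a < k" for a
    proof -
      have "s * dotp n u (x a) = (\<Sum>i<n. (\<Sum>j<n. B i j * v j) * x a i)"
        unfolding dotp_def sum_distrib_left using Bv by (intro sum.cong refl) (auto simp: mult_ac)
      also have "\<dots> = (\<Sum>j<n. v j * (\<Sum>i<n. B i j * x a i))"
        by (simp add: sum_distrib_left sum_distrib_right mult_ac) (rule sum.swap)
      also have "\<dots> = 0" using less.prems(7) a unfolding B_def by simp
      finally show ?thesis using spos by simp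
    qed
    have vy: "dotp n v (y a) = 0" if a: "a < k" for a
    proof -
      have "s * dotp n v (y a) = (\<Sum>j<n. (\<Sum>i<n. B i j * u i) * y a j)"
        unfolding dotp_def sum_distrib_left using Bu by (intro sum.cong refl) (auto simp: mult_ac)
      also have "\<dots> = (\<Sum>i<n. u i * (\<Sum>j<n. B i j * y a j))"
        by (simp add: sum_distrib_left sum_distrib_right mult_ac) (rule sum.swap)
      also have "\<dots> = 0" using less.prems(6) a unfolding B_def by simp
      finally show ?thesis using spos by simp
    qed
    define x' where "x' = x(k := u)"
    define y' where "y' = y(k := v)"
    define \<sigma>' where "\<sigma>' = \<sigma>(k := s)"
    have uu: "dotp n u u = 1" using u1 unfolding dotp_def nsq_def by (simp add: power2_eq_square)
    have vv: "dotp n v v = 1" using v1 unfolding dotp_def nsq_def by (simp add: power2_eq_square)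
    have xu: "dotp n (x a) u = 0" if "a < k" for a using ux[OF that] dotp_comm[of n u "x a"] by simp
    have yv: "dotp n (y a) v = 0" if "a < k" for a using vy[OF that] dotp_comm[of n v "y a"] by simp
    have ox: "orthon n x' (Suc k)"
      unfolding orthon_def x'_def
    proof (intro allI impI)
      fix a b assume "a < Suc k" "b < Suc k"
      thus "dotp n ((x(k := u)) a) ((x(k := u)) b) = (if a = b then 1 else 0)"
        using less.prems(3) ux xu uu unfolding orthon_def
        by (cases "a = k"; cases "b = k") auto
    qed
    have oy: "orthon n y' (Suc k)"
      unfolding orthon_def y'_def
    proof (intro allI impI)
      fix a b assume "a < Suc k" "b < Suc k"
      thus "dotp n ((y(k := v)) a) ((y(k := v)) b) = (if a = b then 1 else 0)"
        using less.prems(4) vy yv vv unfolding orthon_def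
        by (cases "a = k"; cases "b = k") auto
    qed
    have "Suc k \<le> n" using bessel[OF ox] .
    hence dlt: "n - Suc k < d" using less.prems(1) by simp
    have Beq: "A i j - (\<Sum>b<Suc k. \<sigma>' b * x' b i * y' b j) = B i j - s * u i * v j" for i j
    proof -
      have "(\<Sum>b<k. \<sigma>' b * x' b i * y' b j) = (\<Sum>b<k. \<sigma> b * x b i * y b j)"
        unfolding x'_def y'_def \<sigma>'_def by (intro sum.cong refl) auto
      thus ?thesis unfolding B_def by (simp add: x'_def y'_def \<sigma>'_def)
    qed
    have c6: "\<forall>a<Suc k. \<forall>i<n. (\<Sum>j<n. (A i j - (\<Sum>b<Suc k. \<sigma>' b * x' b i * y' b j)) * y' a j) = 0"
    proof (intro allI impI)
      fix a i assume a: "a < Suc k" and i: "i < n"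
      have "(\<Sum>j<n. (A i j - (\<Sum>b<Suc k. \<sigma>' b * x' b i * y' b j)) * y' a j)
          = (\<Sum>j<n. B i j * y' a j) - s * u i * dotp n v (y' a)"
        unfolding Beq dotp_def by (simp add: left_diff_distrib right_diff_distrib sum_subtractf sum_distrib_left mult_ac)
      also have "\<dots> = 0"
      proof (cases "a = k")
        case True thus ?thesis using Bv i vv unfolding y'_def by simp
      next
        case False
        hence "a < k" "y' a = y a" using a unfolding y'_def by auto
        thus ?thesis using less.prems(6) i vy unfolding B_def by simp
      qed
      finally show "(\<Sum>j<n. (A i j - (\<Sum>b<Suc k. \<sigma>' b * x' b i * y' b j)) * y' a j) = 0" .
    qed
    have c7: "\<forall>a<Suc k. \<forall>j<n. (\<Sum>i<n. (A i j - (\<Sum>b<Suc k. \<sigma>' b * x' b i * y' b j)) * x' a i) = 0"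
    proof (intro allI impI)
      fix a j assume a: "a < Suc k" and j: "j < n"
      have "(\<Sum>i<n. (A i j - (\<Sum>b<Suc k. \<sigma>' b * x' b i * y' b j)) * x' a i)
          = (\<Sum>i<n. B i j * x' a i) - s * v j * dotp n u (x' a)"
        unfolding Beq dotp_def by (simp add: left_diff_distrib right_diff_distrib sum_subtractf sum_distrib_left mult_ac)
      also have "\<dots> = 0"
      proof (cases "a = k")
        case True thus ?thesis using Bu j uu unfolding x'_def by simp
      next
        case False
        hence "a < k" "x' a = x a" using a unfolding x'_def by auto
        thus ?thesis using less.prems(7) j ux unfolding B_def by simp
      qed
      finally show "(\<Sum>i<n. (A i j - (\<Sum>b<Suc k. \<sigma>' b * x' b i * y' b j)) * x' a i) = 0" .
    qed
    have c5: "\<forall>a<Suc k. 0 \<le> \<sigma>' a" using less.prems(5) spos unfolding \<sigma>'_def by (auto simp: less_Suc_eq)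
    show ?thesis by (rule less.IH[OF dlt refl less.prems(2) ox oy c5 c6 c7])
  qed
qed

lemma svd:
  assumes "1 \<le> n"
  shows "\<exists>r \<sigma> x y. (\<forall>a<r. 0 \<le> \<sigma> a) \<and> orthon n x r \<and> orthon n y r \<and>
           (\<forall>i<n. \<forall>j<n. A i j = (\<Sum>a<r. \<sigma> a * x a i * y a j))"
  by (rule svd_gen[of n 0 "n" x y \<sigma> A]) (insert assms, auto simp: orthon_def)

lemma sum_split_mul: "(\<Sum>k<(p::nat)*m. h k) = (\<Sum>j<m. \<Sum>i<p. h (i + p*j))"
proof -
  have "(\<Sum>k<p*m. h k) = (\<Sum>k<m*p. h k)" by (simp add: mult.commute)
  also have "\<dots> = (\<Sum>j<m. \<Sum>k\<in>{j*p..<j*p+p}. h k)" by (rule sum.nat_group[symmetric])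
  also have "\<dots> = (\<Sum>j<m. \<Sum>i<p. h (i + p*j))"
  proof -
    have eq: "(\<Sum>k\<in>{j*p..<j*p+p}. h k) = (\<Sum>i<p. h (i + p*j))" for j
    proof -
      have "(\<Sum>k\<in>{0+j*p..<p+j*p}. h k) = (\<Sum>i\<in>{0..<p}. h (i + j*p))"
        by (rule sum.shift_bounds_nat_ivl)
      thus ?thesis by (simp add: atLeast0LessThan add.commute mult.commute)
    qed
    show ?thesis by (simp add: eq)
  qed
  finally show ?thesis .
qed

lemma modp[simp]: "i < p \<Longrightarrow> (i + p * j) mod p = (i::nat)"
  by (simp add: mult.commute)
lemma divp[simp]: "i < p \<Longrightarrow> (i + p * j) div p = (j::nat)"
  by (simp add: mult.commute)

lemma idx_lt: "i < p \<Longrightarrow> j < q \<Longrightarrow> i + p * j < p * (q::nat)"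
proof -
  assume "i < p" "j < q"
  hence "i + p * j < p + p * j" by simp
  also have "\<dots> = p * (Suc j)" by simp
  also have "\<dots> \<le> p * q" using \<open>j < q\<close> by (intro mult_le_mono2) simp
  finally show ?thesis .
qed

definition ffG :: "nat \<Rightarrow> nat \<Rightarrow> (nat \<Rightarrow> nat \<Rightarrow> real) \<Rightarrow> (nat \<Rightarrow> nat \<Rightarrow> real) \<Rightarrow> nat \<Rightarrow> nat \<Rightarrow> real" where
  "ffG p q S B i j = (\<Sum>b<q. \<Sum>a<q. B a b * S (i + p*a) (j + p*b))"

definition ff :: "nat \<Rightarrow> nat \<Rightarrow> (nat \<Rightarrow> nat \<Rightarrow> real) \<Rightarrow> (nat \<Rightarrow> nat \<Rightarrow> real) \<Rightarrow> (nat \<Rightarrow> nat \<Rightarrow> real) \<Rightarrow> real" where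
  "ff p q S A B = (\<Sum>j<p. \<Sum>i<p. A i j * ffG p q S B i j)"

lemma dsum_lin:
  "(\<Sum>j<p. \<Sum>i<p'. (\<Sum>c<r. g c i j) * H i j) = (\<Sum>c<r. \<Sum>j<p. \<Sum>i<p'. g c i j * (H i j::real))"
proof -
  have "(\<Sum>j<p. \<Sum>i<p'. (\<Sum>c<r. g c i j) * H i j) = (\<Sum>j<p. \<Sum>i<p'. \<Sum>c<r. g c i j * H i j)"
    by (simp add: sum_distrib_right)
  also have "\<dots> = (\<Sum>j<p. \<Sum>c<r. \<Sum>i<p'. g c i j * H i j)" by (intro sum.cong refl) (rule sum.swap)
  also have "\<dots> = (\<Sum>c<r. \<Sum>j<p. \<Sum>i<p'. g c i j * H i j)" by (rule sum.swap)
  finally show ?thesis .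
qed

lemma ff_sum_left: "ff p q S (\<lambda>i j. \<Sum>c<r. g c i j) B = (\<Sum>c<r. ff p q S (g c) B)"
  unfolding ff_def by (rule dsum_lin)

lemma ffG_sum: "ffG p q S (\<lambda>a b. \<Sum>c<r. g c a b) i j = (\<Sum>c<r. ffG p q S (g c) i j)"
  unfolding ffG_def using dsum_lin[where p=q and p'=q and r=r and g=g and H="\<lambda>a b. S (i + p*a) (j + p*b)"] by simp

lemma ff_sum_right: "ff p q S A (\<lambda>a b. \<Sum>c<r. g c a b) = (\<Sum>c<r. ff p q S A (g c))"
proof -
  have "ff p q S A (\<lambda>a b. \<Sum>c<r. g c a b) = (\<Sum>j<p. \<Sum>i<p. \<Sum>c<r. A i j * ffG p q S (g c) i j)"
    unfolding ff_def ffG_sum by (simp add: sum_distrib_left)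
  also have "\<dots> = (\<Sum>j<p. \<Sum>c<r. \<Sum>i<p. A i j * ffG p q S (g c) i j)" by (intro sum.cong refl) (rule sum.swap)
  also have "\<dots> = (\<Sum>c<r. \<Sum>j<p. \<Sum>i<p. A i j * ffG p q S (g c) i j)" by (rule sum.swap)
  finally show ?thesis unfolding ff_def .
qed

lemma ff_scale: "ff p q S (\<lambda>i j. c * A i j) (\<lambda>a b. d * B a b) = c * d * ff p q S A B"
  unfolding ff_def ffG_def by (simp add: sum_distrib_left mult_ac)

lemma ff_cong:
  assumes "\<And>i j. i < p \<Longrightarrow> j < p \<Longrightarrow> A i j = A' i j" "\<And>a b. a < q \<Longrightarrow> b < q \<Longrightarrow> B a b = B' a b"
  shows "ff p q S A B = ff p q S A' B'"
  unfolding ff_def ffG_def using assms by (intro sum.cong refl) auto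

lemma bil_rearr:
  assumes "0 < p" "0 < q"
  shows "bil (p^2) (q^2) (rearr p q S) u v = ff p q S (unvec p u) (unvec q v)"
proof -
  have "bil (p^2) (q^2) (rearr p q S) u v = (\<Sum>k<p*p. \<Sum>l<q*q. u k * rearr p q S k l * v l)"
    unfolding bil_def by (simp add: power2_eq_square)
  also have "\<dots> = (\<Sum>j<p. \<Sum>i<p. \<Sum>b<q. \<Sum>a<q. u (i + p*j) * rearr p q S (i + p*j) (a + q*b) * v (a + q*b))"
    by (simp add: sum_split_mul)
  also have "\<dots> = (\<Sum>j<p. \<Sum>i<p. \<Sum>b<q. \<Sum>a<q. u (i + p*j) * (v (a + q*b) * S (i + p*a) (j + p*b)))"
    unfolding rearr_def by (intro sum.cong refl) (simp add: mult_ac add.commute)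
  also have "\<dots> = ff p q S (unvec p u) (unvec q v)"
    unfolding ff_def ffG_def unvec_def by (simp add: sum_distrib_left)
  finally show ?thesis .
qed

definition Qf :: "nat \<Rightarrow> (nat \<Rightarrow> nat \<Rightarrow> real) \<Rightarrow> (nat \<Rightarrow> real) \<Rightarrow> (nat \<Rightarrow> real) \<Rightarrow> real" where
  "Qf n S w1 w2 = (\<Sum>m<n. \<Sum>m'<n. w1 m * S m m' * w2 m')"

lemma psd_Qf: "psd n S \<Longrightarrow> 2 * Qf n S w1 w2 \<le> Qf n S w1 w1 + Qf n S w2 w2"
proof -
  assume ps: "psd n S"
  have sy: "Qf n S w2 w1 = Qf n S w1 w2"
  proof -
    have "Qf n S w2 w1 = (\<Sum>m'<n. \<Sum>m<n. w2 m * S m m' * w1 m')" unfolding Qf_def by (rule sum.swap)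
    also have "\<dots> = Qf n S w1 w2" unfolding Qf_def
      using ps unfolding psd_def symm_def by (intro sum.cong refl) (auto simp: mult_ac)
    finally show ?thesis .
  qed
  have "\<forall>x. 0 \<le> (\<Sum>i<n. \<Sum>j<n. x i * S i j * x j)" using ps unfolding psd_def by blast
  from spec[OF this, of "\<lambda>m. w1 m - w2 m"]
  have "0 \<le> (\<Sum>m<n. \<Sum>m'<n. (w1 m - w2 m) * S m m' * (w1 m' - w2 m'))" by simp
  also have "\<dots> = Qf n S w1 w1 - Qf n S w1 w2 - Qf n S w2 w1 + Qf n S w2 w2"
    unfolding Qf_def by (simp add: algebra_simps sum_subtractf sum.distrib)
  finally show ?thesis using sy by simp
qed

lemma sum4_perm:
  "(\<Sum>a<q. \<Sum>i<p. \<Sum>b<q. \<Sum>j<p. T a i b j) = (\<Sum>j<p. \<Sum>i<p. \<Sum>b<q. \<Sum>a<q. (T a i b j::real))"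
proof -
  have "(\<Sum>a<q. \<Sum>i<p. \<Sum>b<q. \<Sum>j<p. T a i b j) = (\<Sum>a<q. \<Sum>i<p. \<Sum>j<p. \<Sum>b<q. T a i b j)"
    by (rule sum.cong[OF refl], rule sum.cong[OF refl], rule sum.swap)
  also have "\<dots> = (\<Sum>a<q. \<Sum>j<p. \<Sum>i<p. \<Sum>b<q. T a i b j)"
    by (rule sum.cong[OF refl], rule sum.swap)
  also have "\<dots> = (\<Sum>j<p. \<Sum>a<q. \<Sum>i<p. \<Sum>b<q. T a i b j)" by (rule sum.swap)
  also have "\<dots> = (\<Sum>j<p. \<Sum>i<p. \<Sum>a<q. \<Sum>b<q. T a i b j)"
    by (rule sum.cong[OF refl], rule sum.swap)
  also have "\<dots> = (\<Sum>j<p. \<Sum>i<p. \<Sum>b<q. \<Sum>a<q. T a i b j)"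
    by (rule sum.cong[OF refl], rule sum.cong[OF refl], rule sum.swap)
  finally show ?thesis .
qed

lemma Qf_ff:
  assumes "0 < p"
  shows "Qf (p*q) S (\<lambda>m. z (m div p) * x (m mod p)) (\<lambda>m. t (m div p) * y (m mod p))
       = ff p q S (\<lambda>i j. x i * y j) (\<lambda>a b. z a * t b)"
proof -
  have "Qf (p*q) S (\<lambda>m. z (m div p) * x (m mod p)) (\<lambda>m. t (m div p) * y (m mod p))
     = (\<Sum>a<q. \<Sum>i<p. \<Sum>b<q. \<Sum>j<p. z a * x i * S (i + p*a) (j + p*b) * (t b * y j))"
    unfolding Qf_def by (simp add: sum_split_mul)
  also have "\<dots> = (\<Sum>j<p. \<Sum>i<p. \<Sum>b<q. \<Sum>a<q. z a * x i * S (i + p*a) (j + p*b) * (t b * y j))"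
    by (rule sum4_perm)
  also have "\<dots> = ff p q S (\<lambda>i j. x i * y j) (\<lambda>a b. z a * t b)"
    unfolding ff_def ffG_def by (simp add: sum_distrib_left mult_ac)
  finally show ?thesis .
qed

lemma ff_rank1:
  assumes "0 < p" "psd (p*q) S"
  shows "2 * ff p q S (\<lambda>i j. x i * y j) (\<lambda>a b. z a * t b) \<le>
     ff p q S (\<lambda>i j. x i * x j) (\<lambda>a b. z a * z b) + ff p q S (\<lambda>i j. y i * y j) (\<lambda>a b. t a * t b)"
  using psd_Qf[OF assms(2), of "\<lambda>m. z (m div p) * x (m mod p)" "\<lambda>m. t (m div p) * y (m mod p)"]
  unfolding Qf_ff[OF assms(1)] .

lemma ff_expand:
  "ff p q S (\<lambda>i j. \<Sum>c<r. \<sigma> c * X c i * Y c j) (\<lambda>a b. \<Sum>d<r'. \<tau> d * Z d a * T d b)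
   = (\<Sum>c<r. \<Sum>d<r'. \<sigma> c * \<tau> d * ff p q S (\<lambda>i j. X c i * Y c j) (\<lambda>a b. Z d a * T d b))"
proof -
  have sc: "ff p q S (\<lambda>i j. \<sigma> c * X c i * Y c j) (\<lambda>a b. \<tau> d * Z d a * T d b) =
      \<sigma> c * \<tau> d * ff p q S (\<lambda>i j. X c i * Y c j) (\<lambda>a b. Z d a * T d b)" for c d
    unfolding ff_def ffG_def by (simp add: sum_distrib_left mult_ac)
  show ?thesis
    unfolding ff_sum_left ff_sum_right sc ..
qed

lemma fr_expand:
  "fr p p (\<lambda>i j. \<Sum>c<r. \<sigma> c * X c i * Y c j) =
     (\<Sum>c<r. \<Sum>d<r. \<sigma> c * \<sigma> d * (dotp p (X c) (X d) * dotp p (Y c) (Y d)))"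
proof -
  have "fr p p (\<lambda>i j. \<Sum>c<r. \<sigma> c * X c i * Y c j) =
     (\<Sum>i<p. \<Sum>j<p. \<Sum>c<r. \<Sum>d<r. \<sigma> c * \<sigma> d * (X c i * X d i) * (Y c j * Y d j))"
    unfolding fr_def by (simp add: power2_eq_square sum_product mult_ac)
  also have "\<dots> = (\<Sum>i<p. \<Sum>c<r. \<Sum>d<r. \<Sum>j<p. \<sigma> c * \<sigma> d * (X c i * X d i) * (Y c j * Y d j))"
  proof (intro sum.cong refl)
    fix i
    have "(\<Sum>j<p. \<Sum>c<r. \<Sum>d<r. \<sigma> c * \<sigma> d * (X c i * X d i) * (Y c j * Y d j)) =
          (\<Sum>c<r. \<Sum>j<p. \<Sum>d<r. \<sigma> c * \<sigma> d * (X c i * X d i) * (Y c j * Y d j))" by (rule sum.swap)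
    also have "\<dots> = (\<Sum>c<r. \<Sum>d<r. \<Sum>j<p. \<sigma> c * \<sigma> d * (X c i * X d i) * (Y c j * Y d j))"
      by (intro sum.cong refl) (rule sum.swap)
    finally show "(\<Sum>j<p. \<Sum>c<r. \<Sum>d<r. \<sigma> c * \<sigma> d * (X c i * X d i) * (Y c j * Y d j)) =
          (\<Sum>c<r. \<Sum>d<r. \<Sum>j<p. \<sigma> c * \<sigma> d * (X c i * X d i) * (Y c j * Y d j))" .
  qed
  also have "\<dots> = (\<Sum>c<r. \<Sum>i<p. \<Sum>d<r. \<Sum>j<p. \<sigma> c * \<sigma> d * (X c i * X d i) * (Y c j * Y d j))"
    by (rule sum.swap)
  also have "\<dots> = (\<Sum>c<r. \<Sum>d<r. \<Sum>i<p. \<Sum>j<p. \<sigma> c * \<sigma> d * (X c i * X d i) * (Y c j * Y d j))"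
    by (intro sum.cong refl) (rule sum.swap)
  also have "\<dots> = (\<Sum>c<r. \<Sum>d<r. \<sigma> c * \<sigma> d * (dotp p (X c) (X d) * dotp p (Y c) (Y d)))"
  proof (intro sum.cong refl)
    fix c d
    show "(\<Sum>i<p. \<Sum>j<p. \<sigma> c * \<sigma> d * (X c i * X d i) * (Y c j * Y d j)) =
       \<sigma> c * \<sigma> d * (dotp p (X c) (X d) * dotp p (Y c) (Y d))"
      unfolding dotp_def by (simp add: sum_distrib_left sum_distrib_right mult_ac) (rule sum.swap)
  qed
  finally show ?thesis .
qed

lemma fr_orth:
  assumes "orthon p X r" "orthon p Y r"
  shows "fr p p (\<lambda>i j. \<Sum>c<r. \<sigma> c * X c i * Y c j) = (\<Sum>c<r. (\<sigma> c)\<^sup>2)"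
proof -
  have "fr p p (\<lambda>i j. \<Sum>c<r. \<sigma> c * X c i * Y c j) = (\<Sum>c<r. \<Sum>d<r. if c = d then (\<sigma> c)\<^sup>2 else 0)"
    unfolding fr_expand using assms unfolding orthon_def
    by (intro sum.cong refl) (auto simp: power2_eq_square)
  thus ?thesis by simp
qed

lemma psd_orth:
  assumes "\<forall>c<r. 0 \<le> \<sigma> c"
  shows "psd p (\<lambda>i j. \<Sum>c<r. \<sigma> c * X c i * X c j)"
  unfolding psd_def symm_def
proof (intro conjI allI impI)
  fix i j show "(\<Sum>c<r. \<sigma> c * X c i * X c j) = (\<Sum>c<r. \<sigma> c * X c j * X c i)" by (simp add: mult_ac)
next
  fix w :: "nat \<Rightarrow> real"
  have "(\<Sum>i<p. \<Sum>j<p. w i * (\<Sum>c<r. \<sigma> c * X c i * X c j) * w j) =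
        (\<Sum>i<p. \<Sum>j<p. (\<Sum>c<r. \<sigma> c * X c i * X c j) * (w i * w j))"
    by (simp add: mult_ac)
  also have "\<dots> = (\<Sum>c<r. \<Sum>i<p. \<Sum>j<p. \<sigma> c * X c i * X c j * (w i * w j))"
    by (rule dsum_lin[where g="\<lambda>c j i. \<sigma> c * X c i * X c j" and H="\<lambda>j i. w i * w j"])
  also have "\<dots> = (\<Sum>c<r. \<sigma> c * (dotp p (X c) w)\<^sup>2)"
    unfolding dotp_def power2_eq_square by (simp add: sum_product sum_distrib_left mult_ac)
  also have "\<dots> \<ge> 0" using assms by (intro sum_nonneg) auto
  finally show "0 \<le> (\<Sum>i<p. \<Sum>j<p. w i * (\<Sum>c<r. \<sigma> c * X c i * X c j) * w j)" .
qed

lemma closed_imp: "closed {x. Q x} \<Longrightarrow> closed {x. P \<longrightarrow> Q x}"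
  by (cases P) auto

lemma closed_psd_set: "closed {u::nat\<Rightarrow>real. psd p (unvec p u)}"
proof -
  have eq: "{u::nat\<Rightarrow>real. psd p (unvec p u)} =
     {u. \<forall>i. \<forall>j. i < p \<longrightarrow> j < p \<longrightarrow> u (i + p*j) = u (j + p*i)} \<inter>
     {u. \<forall>x. 0 \<le> (\<Sum>i<p. \<Sum>j<p. x i * u (i + p*j) * x j)}"
    unfolding psd_def symm_def unvec_def by auto
  have c1: "closed {u::nat\<Rightarrow>real. \<forall>i. \<forall>j. i < p \<longrightarrow> j < p \<longrightarrow> u (i + p*j) = u (j + p*i)}"
    by (intro closed_Collect_all closed_imp closed_Collect_eq continuous_coord)
  have c2: "closed {u::nat\<Rightarrow>real. \<forall>x. 0 \<le> (\<Sum>i<p. \<Sum>j<p. x i * u (i + p*j) * x j)}"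
    by (intro closed_Collect_all closed_Collect_le continuous_intros continuous_coord)
  show ?thesis unfolding eq using c1 c2 by (rule closed_Int)
qed

lemma psd_e0: "1 \<le> p \<Longrightarrow> psd p (unvec p (\<lambda>i. if i = 0 then 1 else 0))"
  unfolding psd_def symm_def unvec_def
proof (intro conjI allI impI)
  fix i j assume "1 \<le> p"
  thus "(if i + p * j = 0 then 1 else (0::real)) = (if j + p * i = 0 then 1 else 0)" by auto
next
  fix x :: "nat \<Rightarrow> real" assume p: "1 \<le> p"
  show "0 \<le> (\<Sum>i<p. \<Sum>j<p. x i * (if i + p * j = 0 then 1 else 0) * x j)"
  proof (intro sum_nonneg)
    fix i j
    show "0 \<le> x i * (if i + p * j = 0 then 1 else 0) * x j"
    proof (cases "i + p * j = 0")
      case True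
      hence "i = 0" "j = 0" using p by auto
      thus ?thesis by simp
    next
      case False
      hence "(if i + p * j = 0 then 1 else 0) = (0::real)" by simp
      thus ?thesis by simp
    qed
  qed
qed

lemma fr_unvec: "fr p p (unvec p x) = nsq (p^2) x"
proof -
  have "nsq (p^2) x = (\<Sum>j<p. \<Sum>i<p. (x (i + p*j))\<^sup>2)"
    unfolding nsq_def power2_eq_square[of p] by (rule sum_split_mul)
  also have "\<dots> = fr p p (unvec p x)" unfolding fr_def unvec_def by (rule sum.swap)
  finally show ?thesis by simp
qed

lemma nsq_vec: "nsq (p^2) (vec p P) = fr p p P"
proof -
  have "nsq (p^2) (vec p P) = (\<Sum>j<p. \<Sum>i<p. (vec p P (i + p*j))\<^sup>2)"
    unfolding nsq_def power2_eq_square[of p] by (rule sum_split_mul)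
  also have "\<dots> = (\<Sum>j<p. \<Sum>i<p. (P i j)\<^sup>2)" unfolding vec_def by (intro sum.cong refl) simp
  also have "\<dots> = fr p p P" unfolding fr_def by (rule sum.swap)
  finally show ?thesis .
qed

lemma unvec_trunc_vec: "i < p \<Longrightarrow> j < p \<Longrightarrow> unvec p (trunc (p^2) (vec p P)) i j = P i j"
  using idx_lt[of i p j p] unfolding unvec_def trunc_def vec_def by (simp add: power2_eq_square)

lemma psd_cong:
  assumes h: "\<And>i j. i < p \<Longrightarrow> j < p \<Longrightarrow> A i j = A' i j"
  shows "psd p A \<longleftrightarrow> psd p A'"
proof -
  have q: "(\<Sum>i<p. \<Sum>j<p. x i * A i j * x j) = (\<Sum>i<p. \<Sum>j<p. x i * A' i j * x j)" for x
    by (intro sum.cong refl) (auto simp: h)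
  have s: "symm p A = symm p A'" unfolding symm_def using h by auto
  show ?thesis unfolding psd_def q s ..
qed

lemma fr_cong:
  assumes h: "\<And>i j. i < p \<Longrightarrow> j < p \<Longrightarrow> A i j = A' i j"
  shows "fr p p A = fr p p A'"
  unfolding fr_def by (intro sum.cong refl) (auto simp: h)

lemma core:
  assumes p: "1 \<le> p" and q: "1 \<le> q" and S: "psd (p*q) S"
  shows "\<exists>s u v. top_sing_triple (p^2) (q^2) (rearr p q S) s u v \<and> psd p (unvec p u) \<and> psd q (unvec q v)"
proof -
  define K1 where "K1 = Sph (p^2) \<inter> {u. psd p (unvec p u)}"
  define K2 where "K2 = Sph (q^2) \<inter> {u. psd q (unvec q u)}"
  have cK1: "compact K1" unfolding K1_def by (rule compact_Int_closed[OF compact_Sph closed_psd_set])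
  have cK2: "compact K2" unfolding K2_def by (rule compact_Int_closed[OF compact_Sph closed_psd_set])
  have p2: "1 \<le> p^2" using p by simp
  have q2: "1 \<le> q^2" using q by simp
  have "(\<lambda>i. if i = 0 then 1 else 0) \<in> K1" unfolding K1_def using e0_Sph[OF p2] psd_e0[OF p] by blast
  hence ne1: "K1 \<noteq> {}" by blast
  have "(\<lambda>i. if i = 0 then 1 else 0) \<in> K2" unfolding K2_def using e0_Sph[OF q2] psd_e0[OF q] by blast
  hence ne2: "K2 \<noteq> {}" by blast
  obtain u0 v0 where u0: "u0 \<in> K1" and v0: "v0 \<in> K2"
    and mx: "\<forall>x\<in>K1. \<forall>y\<in>K2. bil (p^2) (q^2) (rearr p q S) x y \<le> bil (p^2) (q^2) (rearr p q S) u0 v0"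
    using exists_max[OF cK1 cK2 ne1 ne2] by blast
  define M where "M = bil (p^2) (q^2) (rearr p q S) u0 v0"
  have pp: "0 < p" "0 < q" using p q by auto
  have bnd: "ff p q S P Q \<le> M" if P: "psd p P" "fr p p P = 1" and Q: "psd q Q" "fr q q Q = 1" for P Q
  proof -
    define u1 where "u1 = trunc (p^2) (vec p P)"
    define v1 where "v1 = trunc (q^2) (vec q Q)"
    have "u1 \<in> K1" unfolding K1_def u1_def
      using trunc_Sph[of "p^2" "vec p P"] nsq_vec[of p P] P psd_cong[of p "unvec p (trunc (p^2) (vec p P))" P]
        unvec_trunc_vec[of _ p _ P] by auto
    moreover have "v1 \<in> K2" unfolding K2_def v1_def
      using trunc_Sph[of "q^2" "vec q Q"] nsq_vec[of q Q] Q psd_cong[of q "unvec q (trunc (q^2) (vec q Q))" Q]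
        unvec_trunc_vec[of _ q _ Q] by auto
    ultimately have "bil (p^2) (q^2) (rearr p q S) u1 v1 \<le> M" using mx unfolding M_def by blast
    moreover have "bil (p^2) (q^2) (rearr p q S) u1 v1 = ff p q S P Q"
      unfolding bil_rearr[OF pp] u1_def v1_def by (rule ff_cong) (simp_all add: unvec_trunc_vec)
    ultimately show ?thesis by simp
  qed
  have main: "bil (p^2) (q^2) (rearr p q S) x y \<le> M" if x: "nsq (p^2) x = 1" and y: "nsq (q^2) y = 1" for x y
  proof -
    obtain r \<sigma> X Y where s1: "\<forall>a<r. 0 \<le> \<sigma> a" "orthon p X r" "orthon p Y r"
      "\<forall>i<p. \<forall>j<p. unvec p x i j = (\<Sum>a<r. \<sigma> a * X a i * Y a j)"
      using svd[OF p, of "unvec p x"] by blast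
    obtain r' \<tau> Z T where s2: "\<forall>a<r'. 0 \<le> \<tau> a" "orthon q Z r'" "orthon q T r'"
      "\<forall>i<q. \<forall>j<q. unvec q y i j = (\<Sum>a<r'. \<tau> a * Z a i * T a j)"
      using svd[OF q, of "unvec q y"] by blast
    define P1 where "P1 = (\<lambda>i j. \<Sum>c<r. \<sigma> c * X c i * X c j)"
    define P2 where "P2 = (\<lambda>i j. \<Sum>c<r. \<sigma> c * Y c i * Y c j)"
    define Q1 where "Q1 = (\<lambda>a b. \<Sum>d<r'. \<tau> d * Z d a * Z d b)"
    define Q2 where "Q2 = (\<lambda>a b. \<Sum>d<r'. \<tau> d * T d a * T d b)"
    have e1: "(\<Sum>c<r. (\<sigma> c)\<^sup>2) = 1"
    proof -
      have "fr p p (unvec p x) = fr p p (\<lambda>i j. \<Sum>a<r. \<sigma> a * X a i * Y a j)"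
        by (rule fr_cong) (use s1(4) in auto)
      thus ?thesis using fr_unvec[of p x] x fr_orth[OF s1(2,3)] by simp
    qed
    have e2: "(\<Sum>c<r'. (\<tau> c)\<^sup>2) = 1"
    proof -
      have "fr q q (unvec q y) = fr q q (\<lambda>i j. \<Sum>a<r'. \<tau> a * Z a i * T a j)"
        by (rule fr_cong) (use s2(4) in auto)
      thus ?thesis using fr_unvec[of q y] y fr_orth[OF s2(2,3)] by simp
    qed
    have b1: "ff p q S P1 Q1 \<le> M"
      by (rule bnd) (simp_all add: P1_def Q1_def psd_orth s1(1) s2(1) fr_orth s1(2) s2(2) e1 e2)
    have b2: "ff p q S P2 Q2 \<le> M"
      by (rule bnd) (simp_all add: P2_def Q2_def psd_orth s1(1) s2(1) fr_orth s1(3) s2(3) e1 e2)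
    have "bil (p^2) (q^2) (rearr p q S) x y = ff p q S (unvec p x) (unvec q y)" by (rule bil_rearr[OF pp])
    also have "\<dots> = ff p q S (\<lambda>i j. \<Sum>c<r. \<sigma> c * X c i * Y c j) (\<lambda>a b. \<Sum>d<r'. \<tau> d * Z d a * T d b)"
      by (rule ff_cong) (use s1(4) s2(4) in auto)
    also have "\<dots> = (\<Sum>c<r. \<Sum>d<r'. \<sigma> c * \<tau> d * ff p q S (\<lambda>i j. X c i * Y c j) (\<lambda>a b. Z d a * T d b))"
      by (rule ff_expand)
    also have "\<dots> \<le> (\<Sum>c<r. \<Sum>d<r'. \<sigma> c * \<tau> d *
        ((ff p q S (\<lambda>i j. X c i * X c j) (\<lambda>a b. Z d a * Z d b) + ff p q S (\<lambda>i j. Y c i * Y c j) (\<lambda>a b. T d a * T d b)) / 2))"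
    proof (intro sum_mono mult_left_mono)
      fix c d assume "c \<in> {..<r}" "d \<in> {..<r'}"
      thus "0 \<le> \<sigma> c * \<tau> d" using s1(1) s2(1) by simp
      show "ff p q S (\<lambda>i j. X c i * Y c j) (\<lambda>a b. Z d a * T d b) \<le>
        (ff p q S (\<lambda>i j. X c i * X c j) (\<lambda>a b. Z d a * Z d b) + ff p q S (\<lambda>i j. Y c i * Y c j) (\<lambda>a b. T d a * T d b)) / 2"
        using ff_rank1[OF pp(1) S, of "X c" "Y c" "Z d" "T d"] by simp
    qed
    also have "\<dots> = (ff p q S P1 Q1 + ff p q S P2 Q2) / 2"
      unfolding P1_def P2_def Q1_def Q2_def ff_expand
      by (simp add: sum.distrib sum_divide_distrib distrib_left add_divide_distrib)
    also have "\<dots> \<le> M" using b1 b2 by simp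
    finally show ?thesis .
  qed
  have nu: "nsq (p^2) u0 = 1" using u0 unfolding K1_def Sph_def by auto
  have nv: "nsq (q^2) v0 = 1" using v0 unfolding K2_def Sph_def by auto
  have "top_sing_triple (p^2) (q^2) (rearr p q S) M u0 v0"
    unfolding M_def by (rule max_top[OF nu nv]) (use main in \<open>simp add: M_def\<close>)
  thus ?thesis using u0 v0 unfolding K1_def K2_def by blast
qed

lemma psd_scale: "0 \<le> c \<Longrightarrow> psd n A \<Longrightarrow> psd n (\<lambda>i j. c * A i j)"
  unfolding psd_def symm_def
proof (intro conjI allI impI)
  fix x :: "nat \<Rightarrow> real"
  assume c: "0 \<le> c" and A: "(\<forall>i<n. \<forall>j<n. A i j = A j i) \<and> (\<forall>x. 0 \<le> (\<Sum>i<n. \<Sum>j<n. x i * A i j * x j))"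
  have "(\<Sum>i<n. \<Sum>j<n. x i * (c * A i j) * x j) = c * (\<Sum>i<n. \<Sum>j<n. x i * A i j * x j)"
    by (simp add: sum_distrib_left mult_ac)
  thus "0 \<le> (\<Sum>i<n. \<Sum>j<n. x i * (c * A i j) * x j)" using c A by simp
qed auto

lemma unvec_scale: "unvec m (\<lambda>k. c * v k) = (\<lambda>i j. c * unvec m v i j)"
  unfolding unvec_def by simp

lemma part1:
  assumes d: "1 \<le> d1" "1 \<le> d2" "1 \<le> d3" and Sc: "psd (d1*d2*d3) Sc"
  shows "\<exists>Sb1 Sb2 Sb3. hsvd d1 d2 d3 Sc Sb1 Sb2 Sb3 \<and> psd d1 Sb1 \<and> psd d2 Sb2 \<and> psd d3 Sb3"
proof -
  have Sc': "psd (d1*(d2*d3)) Sc" using Sc by (simp add: mult.assoc)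
  have d23: "1 \<le> d2*d3" using d by simp
  obtain s1 u1 v1 where t1: "top_sing_triple (d1^2) ((d2*d3)^2) (rearr d1 (d2*d3) Sc) s1 u1 v1"
    and p1: "psd d1 (unvec d1 u1)" and p1v: "psd (d2*d3) (unvec (d2*d3) v1)"
    using core[OF d(1) d23 Sc'] by blast
  have s1: "0 \<le> s1" using t1 unfolding top_sing_triple_def sing_triple_def by simp
  have pM: "psd (d2*d3) (unvec (d2*d3) (\<lambda>k. s1 * v1 k))"
    unfolding unvec_scale by (rule psd_scale[OF s1 p1v])
  obtain \<sigma> a b where t2: "top_sing_triple (d2^2) (d3^2) (rearr d2 d3 (unvec (d2*d3) (\<lambda>k. s1 * v1 k))) \<sigma> a b"
    and p2: "psd d2 (unvec d2 a)" and p3: "psd d3 (unvec d3 b)"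
    using core[OF d(2) d(3) pM] by blast
  have \<sigma>: "0 \<le> \<sigma>" using t2 unfolding top_sing_triple_def sing_triple_def by simp
  have p3': "psd d3 (unvec d3 (\<lambda>k. \<sigma> * b k))" unfolding unvec_scale by (rule psd_scale[OF \<sigma> p3])
  show ?thesis unfolding hsvd_def using t1 t2 p1 p2 p3' by blast
qed

lemma bil_split:
  "bil m n R x y = bil m n (\<lambda>k l. R k l - \<alpha> k * \<beta> l) x y + dotp m x \<alpha> * dotp n \<beta> y"
proof -
  have "bil m n (\<lambda>k l. \<alpha> k * \<beta> l) x y = dotp m x \<alpha> * dotp n \<beta> y"
    unfolding bil_def dotp_def by (simp add: sum_product mult_ac)
  moreover have "bil m n R x y = bil m n (\<lambda>k l. R k l - \<alpha> k * \<beta> l) x y + bil m n (\<lambda>k l. \<alpha> k * \<beta> l) x y"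
    unfolding bil_def by (simp add: algebra_simps sum_subtractf sum.distrib)
  ultimately show ?thesis by simp
qed

lemma nsq_sum_le: "nsq n (\<lambda>l. a l + b l) \<le> 2 * nsq n a + 2 * nsq n b"
proof -
  have "(a l + b l)\<^sup>2 \<le> 2 * (a l)\<^sup>2 + 2 * (b l)\<^sup>2" for l
    using sum_squares_ge_zero[of "a l - b l" 0] by (simp add: power2_eq_square algebra_simps)
  hence "nsq n (\<lambda>l. a l + b l) \<le> (\<Sum>l<n. 2 * (a l)\<^sup>2 + 2 * (b l)\<^sup>2)"
    unfolding nsq_def by (intro sum_mono) auto
  thus ?thesis unfolding nsq_def by (simp add: sum.distrib sum_distrib_left)
qed

lemma nsq_transp_bound: "nsq n (\<lambda>l. \<Sum>k<m. E k l * u k) \<le> fr m n E * nsq m u"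
proof -
  have "nsq n (\<lambda>l. \<Sum>k<m. E k l * u k) \<le> (\<Sum>l<n. (\<Sum>k<m. (E k l)\<^sup>2) * nsq m u)"
    unfolding nsq_def by (intro sum_mono) (rule Cauchy_Schwarz_ineq_sum)
  also have "\<dots> = (\<Sum>l<n. \<Sum>k<m. (E k l)\<^sup>2) * nsq m u" by (simp add: sum_distrib_right)
  also have "(\<Sum>l<n. \<Sum>k<m. (E k l)\<^sup>2) = fr m n E" unfolding fr_def by (rule sum.swap)
  finally show ?thesis .
qed

lemma nsq_diff2: "nsq n (\<lambda>i. a i - b i) = nsq n a - 2 * dotp n a b + nsq n b"
  unfolding nsq_def dotp_def
  by (simp add: power2_diff sum.distrib sum_subtractf sum_distrib_left algebra_simps)
lemma nsq_add2: "nsq n (\<lambda>i. a i + b i) = nsq n a + 2 * dotp n a b + nsq n b"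
  unfolding nsq_def dotp_def
  by (simp add: power2_sum sum.distrib sum_distrib_left algebra_simps)

lemma pert:
  assumes mn: "1 \<le> m" "1 \<le> n" and \<alpha>: "nsq m \<alpha> = 1" and \<beta>: "nsq n \<beta> = c\<^sup>2" and c: "0 < c"
    and E: "fr m n (\<lambda>k l. R k l - \<alpha> k * \<beta> l) \<le> \<delta>\<^sup>2" and \<delta>: "0 \<le> \<delta>"
    and t: "top_sing_triple m n R s u v"
  shows "(0 \<le> dotp m u \<alpha> \<longrightarrow> nsq m (\<lambda>k. u k - \<alpha> k) \<le> 4 * \<delta> / c)"
    and "(dotp m u \<alpha> \<le> 0 \<longrightarrow> nsq m (\<lambda>k. u k + \<alpha> k) \<le> 4 * \<delta> / c)"
    and "(0 \<le> dotp m u \<alpha> \<longrightarrow> nsq n (\<lambda>l. s * v l - \<beta> l) \<le> 2 * \<delta>\<^sup>2 + 8 * c * \<delta>)"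
proof -
  define Ee where "Ee = (\<lambda>k l. R k l - \<alpha> k * \<beta> l)"
  have st: "sing_triple m n R s u v" using t unfolding top_sing_triple_def by simp
  have u1: "nsq m u = 1" and v1: "nsq n v = 1" using st unfolding sing_triple_def unit_vec_nsq by auto
  define v0 where "v0 = (\<lambda>l. \<beta> l / c)"
  have v01: "nsq n v0 = 1" unfolding v0_def nsq_def using \<beta> c
    by (simp add: power_divide sum_divide_distrib[symmetric] nsq_def)
  have bv0: "dotp n \<beta> v0 = c" unfolding v0_def dotp_def using \<beta> c
    by (simp add: sum_divide_distrib[symmetric] nsq_def power2_eq_square)
  have aa: "dotp m \<alpha> \<alpha> = 1" using \<alpha> unfolding nsq_def dotp_def by (simp add: power2_eq_square)
  have absE: "\<bar>bil m n Ee x y\<bar> \<le> \<delta>" if "nsq m x = 1" "nsq n y = 1" for x y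
    using abs_bil_bound[of m n Ee \<delta> x y] E \<delta> that unfolding Ee_def by simp
  have "bil m n R \<alpha> v0 \<le> s" by (rule top_ge[OF t mn \<alpha> v01])
  hence lo: "c - \<delta> \<le> s" using bil_split[of m n R \<alpha> v0 \<alpha> \<beta>] absE[OF \<alpha> v01] aa bv0
    unfolding Ee_def by simp
  have "s = bil m n R u v" using sing_bil[OF st] .
  hence hi: "s \<le> \<delta> + dotp m u \<alpha> * dotp n \<beta> v"
    using bil_split[of m n R u v \<alpha> \<beta>] absE[OF u1 v1] unfolding Ee_def by simp
  have key: "c - 2 * \<delta> \<le> dotp m u \<alpha> * dotp n \<beta> v" using lo hi by simp
  have "(dotp n \<beta> v)\<^sup>2 \<le> c\<^sup>2" using cs[of n \<beta> v] \<beta> v1 by simp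
  hence bvc: "\<bar>dotp n \<beta> v\<bar> \<le> c" using c power2_le_imp_le[of "\<bar>dotp n \<beta> v\<bar>" c] by simp
  have "(dotp m u \<alpha>)\<^sup>2 \<le> 1" using cs[of m u \<alpha>] u1 \<alpha> by simp
  hence "\<bar>dotp m u \<alpha>\<bar> \<le> 1" using power2_le_imp_le[of "\<bar>dotp m u \<alpha>\<bar>" 1] by simp
  hence ua1: "dotp m u \<alpha> \<le> 1" "-1 \<le> dotp m u \<alpha>" by auto
  have ndiff: "nsq m (\<lambda>k. u k - \<alpha> k) = 2 - 2 * dotp m u \<alpha>" using nsq_diff2[of m u \<alpha>] u1 \<alpha> by simp
  have nadd: "nsq m (\<lambda>k. u k + \<alpha> k) = 2 + 2 * dotp m u \<alpha>" using nsq_add2[of m u \<alpha>] u1 \<alpha> by simp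
  show 1: "0 \<le> dotp m u \<alpha> \<longrightarrow> nsq m (\<lambda>k. u k - \<alpha> k) \<le> 4 * \<delta> / c"
  proof
    assume p: "0 \<le> dotp m u \<alpha>"
    have "dotp m u \<alpha> * dotp n \<beta> v \<le> dotp m u \<alpha> * c"
      using mult_left_mono[OF _ p, of "dotp n \<beta> v" c] bvc by simp
    hence "c * (1 - dotp m u \<alpha>) \<le> 2 * \<delta>" using key by (simp add: algebra_simps)
    hence "1 - dotp m u \<alpha> \<le> 2 * \<delta> / c" using c by (simp add: field_simps)
    thus "nsq m (\<lambda>k. u k - \<alpha> k) \<le> 4 * \<delta> / c" using ndiff by simp
  qed
  show "dotp m u \<alpha> \<le> 0 \<longrightarrow> nsq m (\<lambda>k. u k + \<alpha> k) \<le> 4 * \<delta> / c"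
  proof
    assume p: "dotp m u \<alpha> \<le> 0"
    have "dotp m u \<alpha> * dotp n \<beta> v \<le> - dotp m u \<alpha> * c"
    proof -
      have "dotp m u \<alpha> * dotp n \<beta> v = (- dotp m u \<alpha>) * (- dotp n \<beta> v)" by simp
      also have "\<dots> \<le> (- dotp m u \<alpha>) * c" using mult_left_mono[of "- dotp n \<beta> v" c "- dotp m u \<alpha>"] p bvc by simp
      finally show ?thesis by simp
    qed
    hence "c * (1 + dotp m u \<alpha>) \<le> 2 * \<delta>" using key by (simp add: algebra_simps)
    hence "1 + dotp m u \<alpha> \<le> 2 * \<delta> / c" using c by (simp add: field_simps)
    thus "nsq m (\<lambda>k. u k + \<alpha> k) \<le> 4 * \<delta> / c" using nadd by simp
  qed
  show "0 \<le> dotp m u \<alpha> \<longrightarrow> nsq n (\<lambda>l. s * v l - \<beta> l) \<le> 2 * \<delta>\<^sup>2 + 8 * c * \<delta>"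
  proof
    assume p: "0 \<le> dotp m u \<alpha>"
    have Bu: "\<forall>l<n. (\<Sum>k<m. R k l * u k) = s * v l" using st unfolding sing_triple_def by simp
    define w where "w = (\<lambda>l. \<Sum>k<m. Ee k l * u k)"
    define t where "t = dotp m u \<alpha> - 1"
    have decomp: "s * v l - \<beta> l = w l + t * \<beta> l" if "l < n" for l
    proof -
      have "(\<Sum>k<m. R k l * u k) = w l + \<beta> l * dotp m u \<alpha>"
        unfolding w_def Ee_def dotp_def by (simp add: algebra_simps sum_subtractf sum_distrib_left)
      thus ?thesis using Bu that unfolding t_def by (simp add: algebra_simps)
    qed
    have "nsq n (\<lambda>l. s * v l - \<beta> l) = nsq n (\<lambda>l. w l + t * \<beta> l)"
      unfolding nsq_def using decomp by (intro sum.cong refl) auto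
    also have "\<dots> \<le> 2 * nsq n w + 2 * nsq n (\<lambda>l. t * \<beta> l)" by (rule nsq_sum_le)
    also have "nsq n (\<lambda>l. t * \<beta> l) = t\<^sup>2 * c\<^sup>2" unfolding nsq_def using \<beta>
      by (simp add: power_mult_distrib sum_distrib_left[symmetric] nsq_def)
    also have "nsq n w \<le> \<delta>\<^sup>2"
    proof -
      have "nsq n w \<le> fr m n Ee * nsq m u" unfolding w_def by (rule nsq_transp_bound)
      thus ?thesis using E u1 unfolding Ee_def by simp
    qed
    also have "t\<^sup>2 \<le> 2 * \<delta> / c"
    proof -
      have t0: "0 \<le> - t" "- t \<le> 1" using ua1 p unfolding t_def by auto
      have "t\<^sup>2 = (-t) * (-t)" by (simp add: power2_eq_square)
      also have "\<dots> \<le> (-t) * 1" using mult_left_mono[OF t0(2) t0(1)] .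
      also have "\<dots> \<le> 2 * \<delta> / c"
      proof -
        have "dotp m u \<alpha> * dotp n \<beta> v \<le> dotp m u \<alpha> * c"
          using mult_left_mono[OF _ p, of "dotp n \<beta> v" c] bvc by simp
        hence "c * (1 - dotp m u \<alpha>) \<le> 2 * \<delta>" using key by (simp add: algebra_simps)
        hence "1 - dotp m u \<alpha> \<le> 2 * \<delta> / c" using c by (simp add: field_simps)
        thus ?thesis unfolding t_def by simp
      qed
      finally show ?thesis .
    qed
    hence "2 * \<delta>\<^sup>2 + 2 * (t\<^sup>2 * c\<^sup>2) \<le> 2 * \<delta>\<^sup>2 + 2 * (2 * \<delta> / c * c\<^sup>2)"
      using c by (intro add_left_mono mult_left_mono mult_right_mono) auto
    also have "\<dots> \<le> 2 * \<delta>\<^sup>2 + 8 * c * \<delta>" using c \<delta> by (simp add: power2_eq_square field_simps)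
    finally show "nsq n (\<lambda>l. s * v l - \<beta> l) \<le> 2 * \<delta>\<^sup>2 + 8 * c * \<delta>" by simp
  qed
qed

lemma quad_delta:
  assumes "0 < (n::nat)"
  shows "(\<Sum>i<n. \<Sum>j<n. (if i = 0 then 1 else 0) * A i j * (if j = 0 then 1 else 0)) = (A 0 0::real)"
proof -
  have "(\<Sum>i<n. \<Sum>j<n. (if i = 0 then 1 else 0) * A i j * (if j = 0 then 1 else 0)) =
        (\<Sum>i<n. (A i 0) * (if i = 0 then 1 else 0))"
  proof (intro sum.cong refl)
    fix i
    have "(\<Sum>j<n. ((if i = 0 then 1 else 0) * A i j) * (if j = 0 then 1 else 0)) = (if i = 0 then 1 else 0) * A i 0"
      by (rule sum_delta_r) fact
    thus "(\<Sum>j<n. (if i = 0 then 1 else 0) * A i j * (if j = 0 then 1 else 0)) = A i 0 * (if i = 0 then 1 else 0)"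
      by (simp add: mult_ac)
  qed
  also have "\<dots> = A 0 0" by (rule sum_delta_r) fact
  finally show ?thesis .
qed

lemma psd_diag0: "psd n A \<Longrightarrow> 0 < n \<Longrightarrow> 0 \<le> A 0 0"
proof -
  assume ps: "psd n A" and n: "0 < n"
  have "\<forall>x. 0 \<le> (\<Sum>i<n. \<Sum>j<n. x i * A i j * x j)" using ps unfolding psd_def by blast
  from spec[OF this, of "\<lambda>i. if i = 0 then 1 else 0"]
  show ?thesis unfolding quad_delta[OF n] .
qed

lemma pd_diag0: "pd n A \<Longrightarrow> 0 < n \<Longrightarrow> 0 < A 0 0"
proof -
  assume ps: "pd n A" and n: "0 < n"
  have "\<forall>x. (\<exists>i<n. x i \<noteq> 0) \<longrightarrow> 0 < (\<Sum>i<n. \<Sum>j<n. x i * A i j * x j)" using ps unfolding pd_def by blast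
  from spec[OF this, of "\<lambda>i. if i = 0 then 1 else 0"] n
  show ?thesis unfolding quad_delta[OF n] by auto
qed

lemma fr_cong2:
  assumes h: "\<And>i j. i < m \<Longrightarrow> j < n \<Longrightarrow> A i j = A' i j"
  shows "fr m n A = fr m n A'"
  unfolding fr_def by (intro sum.cong refl) (auto simp: h)

lemma fr_rearr:
  assumes "0 < p" "0 < q"
  shows "fr (p^2) (q^2) (rearr p q M) = fr (p*q) (p*q) M"
proof -
  have "fr (p^2) (q^2) (rearr p q M) = (\<Sum>k<p*p. \<Sum>l<q*q. (rearr p q M k l)\<^sup>2)"
    unfolding fr_def by (simp add: power2_eq_square[of p] power2_eq_square[of q])
  also have "\<dots> = (\<Sum>j<p. \<Sum>i<p. \<Sum>b<q. \<Sum>a<q. (rearr p q M (i + p*j) (a + q*b))\<^sup>2)"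
    by (simp add: sum_split_mul)
  also have "\<dots> = (\<Sum>j<p. \<Sum>i<p. \<Sum>b<q. \<Sum>a<q. (M (i + p*a) (j + p*b))\<^sup>2)"
    unfolding rearr_def by (intro sum.cong refl) (simp add: mult_ac add.commute)
  also have "\<dots> = (\<Sum>a<q. \<Sum>i<p. \<Sum>b<q. \<Sum>j<p. (M (i + p*a) (j + p*b))\<^sup>2)"
    by (rule sum4_perm[symmetric])
  also have "\<dots> = fr (p*q) (p*q) M"
    unfolding fr_def by (simp add: sum_split_mul)
  finally show ?thesis .
qed

lemma fr_unvec_diff: "fr p p (\<lambda>i j. unvec p x i j - A i j) = nsq (p^2) (\<lambda>k. x k - vec p A k)"
proof -
  have "fr p p (\<lambda>i j. unvec p x i j - A i j) = fr p p (unvec p (\<lambda>k. x k - vec p A k))"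
  proof (rule fr_cong)
    fix i j assume "i < p" "j < p"
    thus "unvec p x i j - A i j = unvec p (\<lambda>k. x k - vec p A k) i j"
      unfolding unvec_def vec_def by simp
  qed
  thus ?thesis by (simp add: fr_unvec)
qed

lemma frob_fr: "frob n A = sqrt (fr n n A)"
  unfolding frob_def fr_def ..

lemma sqrt_le_eps: "x \<le> \<epsilon>\<^sup>2 \<Longrightarrow> 0 < \<epsilon> \<Longrightarrow> sqrt x \<le> \<epsilon>"
  using real_sqrt_le_mono[of x "\<epsilon>\<^sup>2"] by simp

lemma rearr_diff: "rearr p q (mdiff A B) k l = rearr p q A k l - rearr p q B k l"
  unfolding rearr_def mdiff_def ..

lemma sign_pos:
  assumes ps: "psd p (unvec p u)" and p: "0 < p" and a0: "0 < \<alpha> 0"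
    and bnd: "dotp (p^2) u \<alpha> \<le> 0 \<longrightarrow> nsq (p^2) (\<lambda>k. u k + \<alpha> k) \<le> g"
    and g: "g < (\<alpha> 0)\<^sup>2"
  shows "0 \<le> dotp (p^2) u \<alpha>"
proof (rule ccontr)
  assume "\<not> 0 \<le> dotp (p^2) u \<alpha>"
  hence "nsq (p^2) (\<lambda>k. u k + \<alpha> k) \<le> g" using bnd by simp
  moreover have "(u 0 + \<alpha> 0)\<^sup>2 \<le> nsq (p^2) (\<lambda>k. u k + \<alpha> k)"
    using nsq_term_le[of 0 "p^2" "\<lambda>k. u k + \<alpha> k"] p by simp
  moreover have "0 \<le> u 0" using psd_diag0[OF ps p] by (simp add: unvec_def)
  hence "(\<alpha> 0)\<^sup>2 \<le> (u 0 + \<alpha> 0)\<^sup>2" using a0 by (intro power_mono) auto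
  ultimately show False using g by simp
qed

lemma det:
  assumes d: "1 \<le> d1" "1 \<le> d2" "1 \<le> d3"
    and pd1: "pd d1 \<Sigma>1" and pd2: "pd d2 \<Sigma>2" and pd3: "pd d3 \<Sigma>3"
    and f1: "frob d1 \<Sigma>1 = 1" and f2: "frob d2 \<Sigma>2 = 1" and \<epsilon>: "0 < \<epsilon>"
  shows "\<exists>\<delta>>0. \<forall>Sc Sb1 Sb2 Sb3.
     frob (d1*d2*d3) (mdiff Sc (kron d1 (kron d2 \<Sigma>3 \<Sigma>2) \<Sigma>1)) \<le> \<delta> \<longrightarrow>
     hsvd d1 d2 d3 Sc Sb1 Sb2 Sb3 \<longrightarrow> psd d1 Sb1 \<longrightarrow> psd d2 Sb2 \<longrightarrow>
     frob d1 (mdiff Sb1 \<Sigma>1) \<le> \<epsilon> \<and> frob d2 (mdiff Sb2 \<Sigma>2) \<le> \<epsilon> \<and> frob d3 (mdiff Sb3 \<Sigma>3) \<le> \<epsilon>"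
proof -
  define K23 where "K23 = kron d2 \<Sigma>3 \<Sigma>2"
  define \<alpha>1 where "\<alpha>1 = vec d1 \<Sigma>1"
  define \<beta>1 where "\<beta>1 = vec (d2*d3) K23"
  define \<alpha>2 where "\<alpha>2 = vec d2 \<Sigma>2"
  define \<beta>2 where "\<beta>2 = vec d3 \<Sigma>3"
  define c1 where "c1 = sqrt (nsq ((d2*d3)^2) \<beta>1)"
  define c2 where "c2 = sqrt (nsq (d3^2) \<beta>2)"
  have dp: "0 < d1" "0 < d2" "0 < d3" "0 < d2*d3" using d by auto
  have a0: "0 < \<alpha>1 0" unfolding \<alpha>1_def vec_def using pd_diag0[OF pd1 dp(1)] by simp
  have b0: "0 < \<alpha>2 0" unfolding \<alpha>2_def vec_def using pd_diag0[OF pd2 dp(2)] by simp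
  have s30: "0 < \<Sigma>3 0 0" using pd_diag0[OF pd3 dp(3)] .
  have "0 < \<beta>1 0" unfolding \<beta>1_def K23_def vec_def kron_def using s30 pd_diag0[OF pd2 dp(2)] by simp
  hence "0 < (\<beta>1 0)\<^sup>2" by simp
  also have "\<dots> \<le> nsq ((d2*d3)^2) \<beta>1" by (rule nsq_term_le) (use dp in simp)
  finally have c1: "0 < c1" unfolding c1_def by simp
  have c1sq: "nsq ((d2*d3)^2) \<beta>1 = c1\<^sup>2" unfolding c1_def using nsq_nonneg by simp
  have "0 < (\<beta>2 0)\<^sup>2" unfolding \<beta>2_def vec_def using s30 by simp
  also have "\<dots> \<le> nsq (d3^2) \<beta>2" by (rule nsq_term_le) (use dp in simp)
  finally have c2: "0 < c2" unfolding c2_def by simp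
  have c2sq: "nsq (d3^2) \<beta>2 = c2\<^sup>2" unfolding c2_def using nsq_nonneg by simp
  have n\<alpha>1: "nsq (d1^2) \<alpha>1 = 1"
  proof -
    have "sqrt (fr d1 d1 \<Sigma>1) = 1" using f1 by (simp add: frob_fr)
    thus ?thesis unfolding \<alpha>1_def nsq_vec by simp
  qed
  have n\<alpha>2: "nsq (d2^2) \<alpha>2 = 1"
  proof -
    have "sqrt (fr d2 d2 \<Sigma>2) = 1" using f2 by (simp add: frob_fr)
    thus ?thesis unfolding \<alpha>2_def nsq_vec by simp
  qed
  define D where "D = (\<lambda>\<delta>::real. sqrt (2 * \<delta>\<^sup>2 + 8 * c1 * \<delta>))"
  define g1 where "g1 = (\<lambda>\<delta>::real. 4 * \<delta> / c1)"
  define g2 where "g2 = (\<lambda>\<delta>. 4 * D \<delta> / c2)"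
  define g3 where "g3 = (\<lambda>\<delta>. 2 * (D \<delta>)\<^sup>2 + 8 * c2 * D \<delta>)"
  have tD: "(D \<longlongrightarrow> 0) (at_right 0)"
  proof -
    have "((\<lambda>\<delta>::real. sqrt (2 * \<delta>\<^sup>2 + 8 * c1 * \<delta>)) \<longlongrightarrow> sqrt (2 * 0\<^sup>2 + 8 * c1 * 0)) (at_right 0)"
      by (intro tendsto_intros)
    thus ?thesis unfolding D_def by simp
  qed
  have t1: "(g1 \<longlongrightarrow> 0) (at_right 0)"
  proof -
    have "((\<lambda>\<delta>::real. 4 * \<delta> / c1) \<longlongrightarrow> 4 * 0 / c1) (at_right 0)" by (intro tendsto_intros) (use c1 in auto)
    thus ?thesis unfolding g1_def by simp
  qed
  have t2: "(g2 \<longlongrightarrow> 0) (at_right 0)"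
  proof -
    have "((\<lambda>\<delta>::real. 4 * D \<delta> / c2) \<longlongrightarrow> 4 * 0 / c2) (at_right 0)" by (intro tendsto_intros tD) (use c2 in auto)
    thus ?thesis unfolding g2_def by simp
  qed
  have t3: "(g3 \<longlongrightarrow> 0) (at_right 0)"
  proof -
    have "((\<lambda>\<delta>::real. 2 * (D \<delta>)\<^sup>2 + 8 * c2 * D \<delta>) \<longlongrightarrow> 2 * 0\<^sup>2 + 8 * c2 * 0) (at_right 0)"
      by (intro tendsto_intros tD)
    thus ?thesis unfolding g3_def by simp
  qed
  have ev: "\<forall>\<^sub>F \<delta> in at_right 0. 0 < \<delta> \<and> g1 \<delta> < (\<alpha>1 0)\<^sup>2 \<and> g1 \<delta> < \<epsilon>\<^sup>2 \<and> g2 \<delta> < (\<alpha>2 0)\<^sup>2 \<and>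
        g2 \<delta> < \<epsilon>\<^sup>2 \<and> g3 \<delta> < \<epsilon>\<^sup>2"
  proof -
    have e1: "\<forall>\<^sub>F \<delta> in at_right 0. (0::real) < \<delta>" by (rule eventually_at_right_less)
    have e2: "\<forall>\<^sub>F \<delta> in at_right 0. g1 \<delta> < (\<alpha>1 0)\<^sup>2" by (rule order_tendstoD(2)[OF t1]) (use a0 in simp)
    have e3: "\<forall>\<^sub>F \<delta> in at_right 0. g1 \<delta> < \<epsilon>\<^sup>2" by (rule order_tendstoD(2)[OF t1]) (use \<epsilon> in simp)
    have e4: "\<forall>\<^sub>F \<delta> in at_right 0. g2 \<delta> < (\<alpha>2 0)\<^sup>2" by (rule order_tendstoD(2)[OF t2]) (use b0 in simp)
    have e5: "\<forall>\<^sub>F \<delta> in at_right 0. g2 \<delta> < \<epsilon>\<^sup>2" by (rule order_tendstoD(2)[OF t2]) (use \<epsilon> in simp)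
    have e6: "\<forall>\<^sub>F \<delta> in at_right 0. g3 \<delta> < \<epsilon>\<^sup>2" by (rule order_tendstoD(2)[OF t3]) (use \<epsilon> in simp)
    show ?thesis using e1 e2 e3 e4 e5 e6 by (intro eventually_conj)
  qed
  then obtain \<delta> where \<delta>: "0 < \<delta>" "g1 \<delta> < (\<alpha>1 0)\<^sup>2" "g1 \<delta> < \<epsilon>\<^sup>2" "g2 \<delta> < (\<alpha>2 0)\<^sup>2"
      "g2 \<delta> < \<epsilon>\<^sup>2" "g3 \<delta> < \<epsilon>\<^sup>2"
    using eventually_happens[OF ev] by (auto simp: trivial_limit_at_right_real)
  show ?thesis
  proof (intro exI[of _ \<delta>] conjI allI impI \<delta>(1))
    fix Sc Sb1 Sb2 Sb3
    assume close: "frob (d1*d2*d3) (mdiff Sc (kron d1 (kron d2 \<Sigma>3 \<Sigma>2) \<Sigma>1)) \<le> \<delta>"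
      and hs: "hsvd d1 d2 d3 Sc Sb1 Sb2 Sb3" and ps1: "psd d1 Sb1" and ps2: "psd d2 Sb2"
    obtain s1 u1 v1 \<sigma> a b where
      tt1: "top_sing_triple (d1^2) ((d2*d3)^2) (rearr d1 (d2*d3) Sc) s1 u1 v1" and
      Sb1: "Sb1 = unvec d1 u1" and
      tt2: "top_sing_triple (d2^2) (d3^2) (rearr d2 d3 (unvec (d2*d3) (\<lambda>k. s1 * v1 k))) \<sigma> a b" and
      Sb2: "Sb2 = unvec d2 a" and Sb3: "Sb3 = unvec d3 (\<lambda>k. \<sigma> * b k)"
      using hs unfolding hsvd_def by blast
    have E1: "fr (d1^2) ((d2*d3)^2) (\<lambda>k l. rearr d1 (d2*d3) Sc k l - \<alpha>1 k * \<beta>1 l) \<le> \<delta>\<^sup>2"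
    proof -
      have "fr (d1^2) ((d2*d3)^2) (\<lambda>k l. rearr d1 (d2*d3) Sc k l - \<alpha>1 k * \<beta>1 l) =
            fr (d1^2) ((d2*d3)^2) (rearr d1 (d2*d3) (mdiff Sc (kron d1 (kron d2 \<Sigma>3 \<Sigma>2) \<Sigma>1)))"
        by (rule fr_cong2) (simp add: rearr_diff rearr_kron[OF dp(1) dp(4)] \<alpha>1_def \<beta>1_def K23_def)
      also have "\<dots> = fr (d1*d2*d3) (d1*d2*d3) (mdiff Sc (kron d1 (kron d2 \<Sigma>3 \<Sigma>2) \<Sigma>1))"
        using fr_rearr[OF dp(1) dp(4)] by (simp add: mult.assoc)
      also have "\<dots> \<le> \<delta>\<^sup>2"
      proof -
        have "sqrt (fr (d1*d2*d3) (d1*d2*d3) (mdiff Sc (kron d1 (kron d2 \<Sigma>3 \<Sigma>2) \<Sigma>1))) \<le> \<delta>"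
          using close by (simp add: frob_fr)
        thus ?thesis by (rule sqrt_le_D)
      qed
      finally show ?thesis .
    qed
    have P1: "0 \<le> dotp (d1^2) u1 \<alpha>1 \<longrightarrow> nsq (d1^2) (\<lambda>k. u1 k - \<alpha>1 k) \<le> 4 * \<delta> / c1"
      and P2: "dotp (d1^2) u1 \<alpha>1 \<le> 0 \<longrightarrow> nsq (d1^2) (\<lambda>k. u1 k + \<alpha>1 k) \<le> 4 * \<delta> / c1"
      and P3: "0 \<le> dotp (d1^2) u1 \<alpha>1 \<longrightarrow> nsq ((d2*d3)^2) (\<lambda>l. s1 * v1 l - \<beta>1 l) \<le> 2 * \<delta>\<^sup>2 + 8 * c1 * \<delta>"
      using pert[of "d1^2" "(d2*d3)^2" \<alpha>1 \<beta>1 c1 "rearr d1 (d2*d3) Sc" \<delta> s1 u1 v1]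
        d n\<alpha>1 c1sq c1 E1 \<delta>(1) tt1 by auto
    have sg1: "0 \<le> dotp (d1^2) u1 \<alpha>1"
      by (rule sign_pos[OF _ dp(1) a0 P2]) (use ps1 Sb1 \<delta>(2) in \<open>auto simp: g1_def\<close>)
    have r1: "frob d1 (mdiff Sb1 \<Sigma>1) \<le> \<epsilon>"
    proof -
      have "frob d1 (mdiff Sb1 \<Sigma>1) = sqrt (nsq (d1^2) (\<lambda>k. u1 k - \<alpha>1 k))"
        unfolding frob_fr mdiff_def Sb1 fr_unvec_diff \<alpha>1_def ..
      also have "\<dots> \<le> \<epsilon>" using P1 sg1 \<delta>(3) \<epsilon> unfolding g1_def by (intro sqrt_le_eps) auto
      finally show ?thesis .
    qed
    define M where "M = unvec (d2*d3) (\<lambda>k. s1 * v1 k)"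
    have E2: "fr (d2^2) (d3^2) (\<lambda>k l. rearr d2 d3 M k l - \<alpha>2 k * \<beta>2 l) \<le> (D \<delta>)\<^sup>2"
    proof -
      have "fr (d2^2) (d3^2) (\<lambda>k l. rearr d2 d3 M k l - \<alpha>2 k * \<beta>2 l) =
            fr (d2^2) (d3^2) (rearr d2 d3 (mdiff M K23))"
        by (rule fr_cong2) (simp add: rearr_diff rearr_kron[OF dp(2) dp(3)] \<alpha>2_def \<beta>2_def K23_def)
      also have "\<dots> = fr (d2*d3) (d2*d3) (mdiff M K23)" by (rule fr_rearr[OF dp(2) dp(3)])
      also have "\<dots> = nsq ((d2*d3)^2) (\<lambda>l. s1 * v1 l - \<beta>1 l)"
        unfolding mdiff_def M_def fr_unvec_diff \<beta>1_def ..
      also have "\<dots> \<le> (D \<delta>)\<^sup>2"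
      proof -
        have "0 \<le> 2 * \<delta>\<^sup>2 + 8 * c1 * \<delta>" using \<delta>(1) c1 by (intro add_nonneg_nonneg) auto
        hence "(D \<delta>)\<^sup>2 = 2 * \<delta>\<^sup>2 + 8 * c1 * \<delta>" unfolding D_def by (rule real_sqrt_pow2)
        thus ?thesis using P3 sg1 by simp
      qed
      finally show ?thesis .
    qed
    have "0 \<le> 2 * \<delta>\<^sup>2 + 8 * c1 * \<delta>" using \<delta>(1) c1 by (intro add_nonneg_nonneg) auto
    hence Dnn: "0 \<le> D \<delta>" unfolding D_def by simp
    have Q1: "0 \<le> dotp (d2^2) a \<alpha>2 \<longrightarrow> nsq (d2^2) (\<lambda>k. a k - \<alpha>2 k) \<le> 4 * D \<delta> / c2"
      and Q2: "dotp (d2^2) a \<alpha>2 \<le> 0 \<longrightarrow> nsq (d2^2) (\<lambda>k. a k + \<alpha>2 k) \<le> 4 * D \<delta> / c2"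
      and Q3: "0 \<le> dotp (d2^2) a \<alpha>2 \<longrightarrow> nsq (d3^2) (\<lambda>l. \<sigma> * b l - \<beta>2 l) \<le> 2 * (D \<delta>)\<^sup>2 + 8 * c2 * D \<delta>"
      using pert[of "d2^2" "d3^2" \<alpha>2 \<beta>2 c2 "rearr d2 d3 M" "D \<delta>" \<sigma> a b]
        d n\<alpha>2 c2sq c2 E2 Dnn tt2 unfolding M_def by auto
    have sg2: "0 \<le> dotp (d2^2) a \<alpha>2"
      by (rule sign_pos[OF _ dp(2) b0 Q2]) (use ps2 Sb2 \<delta>(4) in \<open>auto simp: g2_def\<close>)
    have r2: "frob d2 (mdiff Sb2 \<Sigma>2) \<le> \<epsilon>"
    proof -
      have "frob d2 (mdiff Sb2 \<Sigma>2) = sqrt (nsq (d2^2) (\<lambda>k. a k - \<alpha>2 k))"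
        unfolding frob_fr mdiff_def Sb2 fr_unvec_diff \<alpha>2_def ..
      also have "\<dots> \<le> \<epsilon>" using Q1 sg2 \<delta>(5) \<epsilon> unfolding g2_def by (intro sqrt_le_eps) auto
      finally show ?thesis .
    qed
    have r3: "frob d3 (mdiff Sb3 \<Sigma>3) \<le> \<epsilon>"
    proof -
      have "frob d3 (mdiff Sb3 \<Sigma>3) = sqrt (nsq (d3^2) (\<lambda>k. \<sigma> * b k - \<beta>2 k))"
        unfolding frob_fr mdiff_def Sb3 fr_unvec_diff \<beta>2_def ..
      also have "\<dots> \<le> \<epsilon>" using Q3 sg2 \<delta>(6) \<epsilon> unfolding g3_def by (intro sqrt_le_eps) auto
      finally show ?thesis .
    qed
    show "frob d1 (mdiff Sb1 \<Sigma>1) \<le> \<epsilon>" by (rule r1)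
    show "frob d2 (mdiff Sb2 \<Sigma>2) \<le> \<epsilon>" by (rule r2)
    show "frob d3 (mdiff Sb3 \<Sigma>3) \<le> \<epsilon>" by (rule r3)
  qed
qed

lemma op_transfer:
  assumes P: "prob_space M" and X: "o_p1 M X" and Xm: "\<And>T. X T \<in> borel_measurable M"
    and Y0: "\<And>T \<omega>. 0 \<le> Y T \<omega>"
    and D: "\<And>\<epsilon>. 0 < \<epsilon> \<Longrightarrow> \<exists>\<delta>>0. \<forall>T. \<forall>\<omega>\<in>space M. X T \<omega> \<le> \<delta> \<longrightarrow> Y T \<omega> \<le> \<epsilon>"
  shows "o_p1 M Y"
  unfolding o_p1_def
proof (intro allI impI)
  interpret prob_space M by (rule P)
  fix \<epsilon> :: real assume \<epsilon>: "0 < \<epsilon>"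
  obtain \<delta> where \<delta>: "0 < \<delta>" and imp: "\<forall>T. \<forall>\<omega>\<in>space M. X T \<omega> \<le> \<delta> \<longrightarrow> Y T \<omega> \<le> \<epsilon>"
    using D[OF \<epsilon>] by blast
  have lim: "((\<lambda>T. measure M {\<omega> \<in> space M. \<delta> < \<bar>X T \<omega>\<bar>}) \<longlongrightarrow> 0) sequentially"
    using X \<delta> unfolding o_p1_def by blast
  have sets: "{\<omega> \<in> space M. \<delta> < \<bar>X T \<omega>\<bar>} \<in> sets M" for T
    using Xm[of T] by measurable
  have sub: "{\<omega> \<in> space M. \<epsilon> < \<bar>Y T \<omega>\<bar>} \<subseteq> {\<omega> \<in> space M. \<delta> < \<bar>X T \<omega>\<bar>}" for T
  proof (intro subsetI)
    fix \<omega> assume "\<omega> \<in> {\<omega> \<in> space M. \<epsilon> < \<bar>Y T \<omega>\<bar>}"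
    hence w: "\<omega> \<in> space M" "\<epsilon> < \<bar>Y T \<omega>\<bar>" by auto
    hence "\<not> Y T \<omega> \<le> \<epsilon>" using Y0[of T \<omega>] by simp
    hence "\<not> X T \<omega> \<le> \<delta>" using imp w(1) by blast
    thus "\<omega> \<in> {\<omega> \<in> space M. \<delta> < \<bar>X T \<omega>\<bar>}" using w(1) by auto
  qed
  show "((\<lambda>T. measure M {\<omega> \<in> space M. \<epsilon> < \<bar>Y T \<omega>\<bar>}) \<longlongrightarrow> 0) sequentially"
  proof (rule tendsto_sandwich[OF _ _ tendsto_const lim])
    show "\<forall>\<^sub>F T in sequentially. 0 \<le> measure M {\<omega> \<in> space M. \<epsilon> < \<bar>Y T \<omega>\<bar>}" by simp
    show "\<forall>\<^sub>F T in sequentially. measure M {\<omega> \<in> space M. \<epsilon> < \<bar>Y T \<omega>\<bar>} \<le> measure M {\<omega> \<in> space M. \<delta> < \<bar>X T \<omega>\<bar>}"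
      using finite_measure_mono[OF sub sets] by simp
  qed
qed

theorem proposition2:
  fixes d1 d2 d3 :: nat
  assumes dims: "1 \<le> d1" "1 \<le> d2" "1 \<le> d3"
  shows
    "(\<forall>Sc. psd (d1*d2*d3) Sc \<longrightarrow>
        (\<exists>Sb1 Sb2 Sb3. hsvd d1 d2 d3 Sc Sb1 Sb2 Sb3 \<and>
                       psd d1 Sb1 \<and> psd d2 Sb2 \<and> psd d3 Sb3))
     \<and>
     (\<forall>(M :: 'a measure) \<Sigma>1 \<Sigma>2 \<Sigma>3
         (Sc :: nat \<Rightarrow> 'a \<Rightarrow> nat \<Rightarrow> nat \<Rightarrow> real)
         (Sb1 :: nat \<Rightarrow> 'a \<Rightarrow> nat \<Rightarrow> nat \<Rightarrow> real) Sb2 Sb3.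
        prob_space M \<longrightarrow>
        pd d1 \<Sigma>1 \<longrightarrow> pd d2 \<Sigma>2 \<longrightarrow> pd d3 \<Sigma>3 \<longrightarrow>
        frob d1 \<Sigma>1 = 1 \<longrightarrow> frob d2 \<Sigma>2 = 1 \<longrightarrow>
        (\<forall>T i j. i < d1*d2*d3 \<longrightarrow> j < d1*d2*d3 \<longrightarrow>
            (\<lambda>\<omega>. Sc T \<omega> i j) \<in> borel_measurable M) \<longrightarrow>
        (\<forall>T. \<forall>\<omega>\<in>space M. psd (d1*d2*d3) (Sc T \<omega>)) \<longrightarrow>
        o_p1 M (\<lambda>T \<omega>. frob (d1*d2*d3)
                   (mdiff (Sc T \<omega>) (kron d1 (kron d2 \<Sigma>3 \<Sigma>2) \<Sigma>1))) \<longrightarrow>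
        (\<forall>T. \<forall>\<omega>\<in>space M.
            hsvd d1 d2 d3 (Sc T \<omega>) (Sb1 T \<omega>) (Sb2 T \<omega>) (Sb3 T \<omega>) \<and>
            psd d1 (Sb1 T \<omega>) \<and> psd d2 (Sb2 T \<omega>) \<and> psd d3 (Sb3 T \<omega>)) \<longrightarrow>
        (\<forall>T i j. i < d1 \<longrightarrow> j < d1 \<longrightarrow> (\<lambda>\<omega>. Sb1 T \<omega> i j) \<in> borel_measurable M) \<longrightarrow>
        (\<forall>T i j. i < d2 \<longrightarrow> j < d2 \<longrightarrow> (\<lambda>\<omega>. Sb2 T \<omega> i j) \<in> borel_measurable M) \<longrightarrow>
        (\<forall>T i j. i < d3 \<longrightarrow> j < d3 \<longrightarrow> (\<lambda>\<omega>. Sb3 T \<omega> i j) \<in> borel_measurable M) \<longrightarrow>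
        o_p1 M (\<lambda>T \<omega>. frob d1 (mdiff (Sb1 T \<omega>) \<Sigma>1)) \<and>
        o_p1 M (\<lambda>T \<omega>. frob d2 (mdiff (Sb2 T \<omega>) \<Sigma>2)) \<and>
        o_p1 M (\<lambda>T \<omega>. frob d3 (mdiff (Sb3 T \<omega>) \<Sigma>3)))"
proof (intro conjI allI impI)
  fix Sc :: "nat \<Rightarrow> nat \<Rightarrow> real" assume "psd (d1*d2*d3) Sc"
  thus "\<exists>Sb1 Sb2 Sb3. hsvd d1 d2 d3 Sc Sb1 Sb2 Sb3 \<and> psd d1 Sb1 \<and> psd d2 Sb2 \<and> psd d3 Sb3"
    by (rule part1[OF dims])
next
  fix M :: "'a measure" and \<Sigma>1 \<Sigma>2 \<Sigma>3 and Sc Sb1 Sb2 Sb3 :: "nat \<Rightarrow> 'a \<Rightarrow> nat \<Rightarrow> nat \<Rightarrow> real"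
  assume P: "prob_space M" and pd1: "pd d1 \<Sigma>1" and pd2: "pd d2 \<Sigma>2" and pd3: "pd d3 \<Sigma>3"
    and f1: "frob d1 \<Sigma>1 = 1" and f2: "frob d2 \<Sigma>2 = 1"
    and Scm: "\<forall>T i j. i < d1*d2*d3 \<longrightarrow> j < d1*d2*d3 \<longrightarrow> (\<lambda>\<omega>. Sc T \<omega> i j) \<in> borel_measurable M"
    and X: "o_p1 M (\<lambda>T \<omega>. frob (d1*d2*d3) (mdiff (Sc T \<omega>) (kron d1 (kron d2 \<Sigma>3 \<Sigma>2) \<Sigma>1)))"
    and H: "\<forall>T. \<forall>\<omega>\<in>space M. hsvd d1 d2 d3 (Sc T \<omega>) (Sb1 T \<omega>) (Sb2 T \<omega>) (Sb3 T \<omega>) \<and>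
            psd d1 (Sb1 T \<omega>) \<and> psd d2 (Sb2 T \<omega>) \<and> psd d3 (Sb3 T \<omega>)"
  have Xm: "(\<lambda>\<omega>. frob (d1*d2*d3) (mdiff (Sc T \<omega>) (kron d1 (kron d2 \<Sigma>3 \<Sigma>2) \<Sigma>1))) \<in> borel_measurable M" for T
  proof -
    have "(\<lambda>\<omega>. \<Sum>i<d1*d2*d3. \<Sum>j<d1*d2*d3. (Sc T \<omega> i j - kron d1 (kron d2 \<Sigma>3 \<Sigma>2) \<Sigma>1 i j)\<^sup>2) \<in> borel_measurable M"
      using Scm by (intro borel_measurable_sum borel_measurable_power borel_measurable_diff) auto
    hence "(\<lambda>\<omega>. sqrt (\<Sum>i<d1*d2*d3. \<Sum>j<d1*d2*d3. (Sc T \<omega> i j - kron d1 (kron d2 \<Sigma>3 \<Sigma>2) \<Sigma>1 i j)\<^sup>2)) \<in> borel_measurable M"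
      by measurable
    thus ?thesis unfolding frob_def mdiff_def .
  qed
  note det' = det[OF dims pd1 pd2 pd3 f1 f2]
  have D: "\<exists>\<delta>>0. \<forall>T. \<forall>\<omega>\<in>space M. frob (d1*d2*d3) (mdiff (Sc T \<omega>) (kron d1 (kron d2 \<Sigma>3 \<Sigma>2) \<Sigma>1)) \<le> \<delta> \<longrightarrow>
      frob d1 (mdiff (Sb1 T \<omega>) \<Sigma>1) \<le> \<epsilon> \<and> frob d2 (mdiff (Sb2 T \<omega>) \<Sigma>2) \<le> \<epsilon> \<and> frob d3 (mdiff (Sb3 T \<omega>) \<Sigma>3) \<le> \<epsilon>"
    if \<epsilon>: "0 < \<epsilon>" for \<epsilon>
  proof -
    obtain \<delta> where \<delta>: "0 < \<delta>" and h: "\<forall>Sc Sb1 Sb2 Sb3.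
     frob (d1*d2*d3) (mdiff Sc (kron d1 (kron d2 \<Sigma>3 \<Sigma>2) \<Sigma>1)) \<le> \<delta> \<longrightarrow>
     hsvd d1 d2 d3 Sc Sb1 Sb2 Sb3 \<longrightarrow> psd d1 Sb1 \<longrightarrow> psd d2 Sb2 \<longrightarrow>
     frob d1 (mdiff Sb1 \<Sigma>1) \<le> \<epsilon> \<and> frob d2 (mdiff Sb2 \<Sigma>2) \<le> \<epsilon> \<and> frob d3 (mdiff Sb3 \<Sigma>3) \<le> \<epsilon>"
      using det'[OF \<epsilon>] by blast
    show ?thesis using \<delta> h H by blast
  qed
  have Y0: "0 \<le> frob n A" for n A unfolding frob_def by (simp add: sum_nonneg)
  show "o_p1 M (\<lambda>T \<omega>. frob d1 (mdiff (Sb1 T \<omega>) \<Sigma>1))"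
    by (rule op_transfer[OF P X Xm Y0]) (use D in blast)
  show "o_p1 M (\<lambda>T \<omega>. frob d2 (mdiff (Sb2 T \<omega>) \<Sigma>2))"
    by (rule op_transfer[OF P X Xm Y0]) (use D in blast)
  show "o_p1 M (\<lambda>T \<omega>. frob d3 (mdiff (Sb3 T \<omega>) \<Sigma>3))"
    by (rule op_transfer[OF P X Xm Y0]) (use D in blast)
qed

end
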